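(* Consider the FlexGT/Acc-FlexGT recursion in the context, and suppose (S), (V), (G) hold. If $\gamma\le\frac{1}{4\beta L}$, then for all $K\ge1$, $$\frac1K\sum_{k=0}^{K-1}\mathbb{E}\|\tilde{\mathbf x}_{\beta k}\|^2\le\frac{2\mathbb{E}\|\tilde{\mathbf x}_0\|^2}{(1-\bar\rho_W)K}+\frac{16n\gamma^2\beta^2\bar\rho_W}{(1-\bar\rho_W)^2}\sigma^2+\frac{8\gamma^2\beta^2\bar\rho_W}{(1-\bar\rho_W)^2K}\sum_{k=0}^{K-1}\mathbb{E}\|\tilde{\mathbf y}_{\beta k}\|^2 .$$
   Context: Problem: $n$ nodes, each with $f_i(x)=\mathbb{E}_{\xi_i\sim\mathcal D_i}[f_i(x;\xi_i)]$ on $\mathbb{R}^p$, $f=\frac1n\sum_i f_i$. Stochastic oracle: unbiased $\nabla f_i(x;\xi_i)$, independent samples across nodes and iterations. Assumptions: (S) each $f_i$ has $L$-Lipschitz gradient. (V) $\mathbb{E}\|\nabla f_i(x;\xi_i)-\nabla f_i(x)\|^2\le\sigma^2$. (G) $W$ doubly stochastic, $\rho_W:=\|W-\mathbf J\|_2^2<1$, $\mathbf J=\mathbf 1\mathbf 1^\top/n$. Algorithm: integers $\alpha,\beta\ge1$, stepsize $\gamma>0$; $\bar W=W^\alpha$ (FlexGT) or $\bar W=M_\alpha$ (Acc-FlexGT) with $M_{-1}=M_0=I$, $M_{s+1}=(1+\eta)WM_s-\eta M_{s-1}$, $\eta=\frac{1-\sqrt{1-\rho_W}}{1+\sqrt{1-\rho_W}}$;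 $\bar\rho_W:=\|\bar W-\mathbf J\|_2^2$ (spectral norm), assumed $<1$. Iterates $\mathbf x_t,\mathbf y_t\in\mathbb{R}^{n\times p}$; snapshot $\mathbf z_t=\mathbf x_{\beta\lfloor t/\beta\rfloor}$; $\nabla G_t$ has rows $\nabla f_i(z_{i,t};\xi_{i,t})$ with fresh samples. $\mathbf y_0=\nabla G_0$. For round $k\ge0$, $j=0,\dots,\beta-2$: $\mathbf x_{\beta k+j+1}=\mathbf x_{\beta k+j}-\gamma\mathbf y_{\beta k+j}$, $\mathbf y_{\beta k+j+1}=\mathbf y_{\beta k+j}+\nabla G_{\beta k+j+1}-\nabla G_{\beta k+j}$; round end: $\mathbf x_{\beta(k+1)}=\bar W(\mathbf x_{\beta k}-\gamma\sum_{j=0}^{\beta-1}\mathbf y_{\beta k+j})$, $\mathbf y_{\beta(k+1)}=\bar W(\mathbf y_{\beta k}+\nabla G_{\beta(k+1)}-\nabla G_{\beta k})$. Notation: $\|\cdot\|$ Euclidean/Frobenius; $\bar x_t=\mathbf 1^\top\mathbf x_t/n$, $\tilde{\mathbf x}_t=\mathbf x_t-\mathbf 1\bar x_t$, $\bar y_t=\mathbf 1^\top\mathbf y_t/n$, $\tilde{\mathbf y}_t=\mathbf y_t-\mathbf 1\bar y_t$. *)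

theory Defs
  imports "HOL-Analysis.Analysis" "HOL-Probability.Probability"
begin

definition avgJ :: "real^'n^'n" where
  "avgJ = (\<chi> i j. 1 / real CARD('n))"

definition spec_sq :: "real^'n^'n \<Rightarrow> real" where
  "spec_sq A = (onorm (\<lambda>v::real^'n. A *v v))\<^sup>2"

definition doubly_stochastic :: "real^'n^'n \<Rightarrow> bool" where
  "doubly_stochastic W \<longleftrightarrow>
     (\<forall>i j. 0 \<le> W $ i $ j) \<and> (\<forall>i. (\<Sum>j\<in>UNIV. W $ i $ j) = 1) \<and> (\<forall>j. (\<Sum>i\<in>UNIV. W $ i $ j) = 1)"

primrec mat_pow :: "real^'n^'n \<Rightarrow> nat \<Rightarrow> real^'n^'n" where
  "mat_pow W 0 = mat 1"
| "mat_pow W (Suc k) = W ** mat_pow W k"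

text \<open>Chebyshev-type accelerated mixing (Acc-FlexGT):
  M_{-1} = M_0 = I, M_{s+1} = (1+eta) W M_s - eta M_{s-1}.\<close>
fun acc_mix :: "real^'n^'n \<Rightarrow> real \<Rightarrow> nat \<Rightarrow> real^'n^'n" where
  "acc_mix W eta 0 = mat 1"
| "acc_mix W eta (Suc 0) = (1 + eta) *\<^sub>R (W ** mat 1) - eta *\<^sub>R mat 1"
| "acc_mix W eta (Suc (Suc s)) = (1 + eta) *\<^sub>R (W ** acc_mix W eta (Suc s)) - eta *\<^sub>R acc_mix W eta s"

definition acc_eta :: "real \<Rightarrow> real" where
  "acc_eta rho = (1 - sqrt (1 - rho)) / (1 + sqrt (1 - rho))"

text \<open>Row average and consensus deviation of an n x p matrix (rows = nodes).\<close>
definition row_avg :: "real^'p^'n \<Rightarrow> real^'p" where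
  "row_avg X = (1 / real CARD('n)) *\<^sub>R (\<Sum>i\<in>UNIV. X $ i)"

definition dev :: "real^'p^'n \<Rightarrow> real^'p^'n" where
  "dev X = (\<chi> i. X $ i - row_avg X)"

end

theory Submission
  imports Defs
begin


lemma (in prob_space) indep_var_vimage:
  assumes ind: "indep_var N1 R1 N2 R2"
    and W: "W \<in> measurable (vimage_algebra (space M) R1 N1) N1'"
    and V: "V \<in> measurable (vimage_algebra (space M) R2 N2) N2'"
  shows "distr M N1' W \<Otimes>\<^sub>M distr M N2' V = distr M (N1' \<Otimes>\<^sub>M N2') (\<lambda>x. (W x, V x))"
proof -
  have r1: "random_variable N1 R1" and r2: "random_variable N2 R2"
    using ind by (auto simp: indep_var_eq)
  have s1: "subalgebra M (vimage_algebra (space M) R1 N1)"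
    using r1 unfolding subalgebra_def
    by (auto simp: sets_vimage_algebra2 measurable_def)
  have s2: "subalgebra M (vimage_algebra (space M) R2 N2)"
    using r2 unfolding subalgebra_def
    by (auto simp: sets_vimage_algebra2 measurable_def)
  have rW: "random_variable N1' W" using measurable_from_subalg[OF s1 W] .
  have rV: "random_variable N2' V" using measurable_from_subalg[OF s2 V] .
  have sub1: "{W -` A \<inter> space M | A. A \<in> sets N1'} \<subseteq> {R1 -` A \<inter> space M | A. A \<in> sets N1}"
  proof
    fix S assume "S \<in> {W -` A \<inter> space M | A. A \<in> sets N1'}"
    then obtain A where A: "A \<in> sets N1'" "S = W -` A \<inter> space M" by auto
    have "W -` A \<inter> space (vimage_algebra (space M) R1 N1) \<in> sets (vimage_algebra (space M) R1 N1)"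
      using W A(1) by (rule measurable_sets)
    then show "S \<in> {R1 -` A \<inter> space M | A. A \<in> sets N1}"
      using A r1 by (simp add: sets_vimage_algebra2 measurable_def)
  qed
  have sub2: "{V -` A \<inter> space M | A. A \<in> sets N2'} \<subseteq> {R2 -` A \<inter> space M | A. A \<in> sets N2}"
  proof
    fix S assume "S \<in> {V -` A \<inter> space M | A. A \<in> sets N2'}"
    then obtain A where A: "A \<in> sets N2'" "S = V -` A \<inter> space M" by auto
    have "V -` A \<inter> space (vimage_algebra (space M) R2 N2) \<in> sets (vimage_algebra (space M) R2 N2)"
      using V A(1) by (rule measurable_sets)
    then show "S \<in> {R2 -` A \<inter> space M | A. A \<in> sets N2}"
      using A r2 by (simp add: sets_vimage_algebra2 measurable_def)
  qed
  have "indep_set (sigma_sets (space M) {R1 -` A \<inter> space M | A. A \<in> sets N1})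
      (sigma_sets (space M) {R2 -` A \<inter> space M | A. A \<in> sets N2})"
    using ind by (simp add: indep_var_eq)
  then have "indep_set (sigma_sets (space M) {W -` A \<inter> space M | A. A \<in> sets N1'})
      (sigma_sets (space M) {V -` A \<inter> space M | A. A \<in> sets N2'})"
    unfolding indep_set_def
    apply (rule indep_sets_mono_sets)
    using sigma_sets_subseteq[OF sub1, of "space M"] sigma_sets_subseteq[OF sub2, of "space M"]
    by (auto split: bool.split)
  then have IS: "indep_set (sigma_sets (space M) {W -` A \<inter> space M | A. A \<in> sets N1'})
      (sigma_sets (space M) {V -` A \<inter> space M | A. A \<in> sets N2'})" .
  let ?S = "distr M N1' W" and ?T = "distr M N2' V" and ?J = "distr M (N1' \<Otimes>\<^sub>M N2') (\<lambda>x. (W x, V x))"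
  have XY: "random_variable (N1' \<Otimes>\<^sub>M N2') (\<lambda>x. (W x, V x))"
    using rW rV by (rule measurable_Pair)
  interpret X: prob_space ?S by (rule prob_space_distr) fact
  interpret Y: prob_space ?T by (rule prob_space_distr) fact
  interpret XY: pair_prob_space ?S ?T ..
  show "?S \<Otimes>\<^sub>M ?T = ?J"
  proof (rule pair_measure_eqI)
    show "sigma_finite_measure ?S" ..
    show "sigma_finite_measure ?T" ..
    fix A B assume A: "A \<in> sets ?S" and B: "B \<in> sets ?T"
    have "emeasure ?J (A \<times> B) = emeasure M ((\<lambda>x. (W x, V x)) -` (A \<times> B) \<inter> space M)"
      using A B by (intro emeasure_distr[OF XY]) auto
    also have "\<dots> = emeasure M ((W -` A \<inter> space M) \<inter> (V -` B \<inter> space M))"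
      by (intro arg_cong[where f="emeasure M"]) auto
    also have "\<dots> = emeasure M (W -` A \<inter> space M) * emeasure M (V -` B \<inter> space M)"
    proof -
      have "W -` A \<inter> space M \<in> sigma_sets (space M) {W -` A \<inter> space M | A. A \<in> sets N1'}"
        using A by (intro sigma_sets.Basic) auto
      moreover have "V -` B \<inter> space M \<in> sigma_sets (space M) {V -` A \<inter> space M | A. A \<in> sets N2'}"
        using B by (intro sigma_sets.Basic) auto
      ultimately show ?thesis
        using indep_setD[OF IS, of "W -` A \<inter> space M" "V -` B \<inter> space M"]
        by (simp add: emeasure_eq_measure measure_nonneg ennreal_mult)
    qed
    also have "\<dots> = emeasure ?S A * emeasure ?T B"
      using rW rV A B by (simp add: emeasure_distr)
    finally show "emeasure ?S A * emeasure ?T B = emeasure ?J (A \<times> B)" by simp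
  qed simp
qed




lemma mm_diff_left: "((A::real^'n^'m) - B) ** X = A ** X - B ** X"
  by (simp add: vec_eq_iff matrix_matrix_mult_def sum_subtractf left_diff_distrib)
lemma mm_add_left: "((A::real^'n^'m) + B) ** X = A ** X + B ** X"
  by (simp add: vec_eq_iff matrix_matrix_mult_def sum.distrib distrib_right)
lemma mm_diff_right: "(A::real^'n^'m) ** (X - Y) = A ** X - A ** Y"
  by (simp add: vec_eq_iff matrix_matrix_mult_def sum_subtractf right_diff_distrib)
lemma mm_add_right: "(A::real^'n^'m) ** (X + Y) = A ** X + A ** Y"
  by (simp add: vec_eq_iff matrix_matrix_mult_def sum.distrib distrib_left)
lemma mm_scaleR_left: "(c *\<^sub>R (A::real^'n^'m)) ** X = c *\<^sub>R (A ** X)"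
  by (simp add: vec_eq_iff matrix_matrix_mult_def sum_distrib_left mult.assoc)
lemma mm_scaleR_right: "(A::real^'n^'m) ** (c *\<^sub>R X) = c *\<^sub>R (A ** X)"
  by (simp add: vec_eq_iff matrix_matrix_mult_def sum_distrib_left algebra_simps)
lemma mm_sum_right: "(A::real^'n^'m) ** (\<Sum>j\<in>S. X j) = (\<Sum>j\<in>S. A ** X j)"
  by (induction S rule: infinite_finite_induct) (auto simp: mm_add_right)

lemma norm_sq_vec: "(norm (x::'a::real_normed_vector^'n))\<^sup>2 = (\<Sum>i\<in>UNIV. (norm (x$i))\<^sup>2)"
  by (simp add: norm_vec_def L2_set_def sum_nonneg)

lemma avgJ_mult: "((avgJ::real^'n^'n) ** X) $ i = row_avg X"
  by (simp add: vec_eq_iff avgJ_def matrix_matrix_mult_def row_avg_def sum_component sum_distrib_left)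

lemma dev_alt: "dev X = X - avgJ ** X"
  by (simp add: dev_def vec_eq_iff avgJ_mult)

lemma dev_diff: "dev (X - Y) = dev X - dev Y"
  by (simp add: dev_alt mm_diff_right)
lemma dev_add: "dev (X + Y) = dev X + dev Y"
  by (simp add: dev_alt mm_add_right)
lemma dev_scaleR: "dev (c *\<^sub>R X) = c *\<^sub>R dev X"
  by (simp add: dev_alt mm_scaleR_right algebra_simps)
lemma dev_sum: "dev (\<Sum>j\<in>S. X j) = (\<Sum>j\<in>S. dev (X j))"
  by (simp add: dev_alt mm_sum_right sum_subtractf)

lemma norm_dev_le: "norm (dev (X::real^'p^'n)) \<le> norm X"
proof -
  let ?m = "row_avg X"
  have N: "real CARD('n) > 0" by simp
  have sumX: "(\<Sum>i\<in>UNIV. X $ i) = real CARD('n) *\<^sub>R ?m"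
    using N by (simp add: row_avg_def)
  have "(norm (dev X))\<^sup>2 = (\<Sum>i\<in>UNIV. (norm (X$i - ?m))\<^sup>2)"
    by (simp add: norm_sq_vec dev_def)
  also have "\<dots> = (\<Sum>i\<in>UNIV. (norm (X$i))\<^sup>2 - 2 * (X$i \<bullet> ?m) + (norm ?m)\<^sup>2)"
    by (simp add: power2_norm_eq_inner inner_diff_left inner_diff_right inner_commute algebra_simps)
  also have "\<dots> = (\<Sum>i\<in>UNIV. (norm (X$i))\<^sup>2) - 2 * ((\<Sum>i\<in>UNIV. X$i) \<bullet> ?m) + real CARD('n) * (norm ?m)\<^sup>2"
    by (simp add: sum.distrib sum_subtractf inner_sum_left sum_distrib_left)
  also have "\<dots> = (\<Sum>i\<in>UNIV. (norm (X$i))\<^sup>2) - real CARD('n) * (norm ?m)\<^sup>2"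
    by (simp add: sumX power2_norm_eq_inner)
  also have "\<dots> \<le> (norm X)\<^sup>2" by (simp add: norm_sq_vec sum_nonneg)
  finally show ?thesis by (simp add: power2_le_iff_abs_le)
qed

lemma norm_mm_le: "norm ((A::real^'n^'n) ** (X::real^'p^'n)) \<le> onorm (\<lambda>v. A *v v) * norm X"
proof -
  let ?c = "\<lambda>k. (\<chi> i. X$i$k) :: real^'n"
  have bl: "bounded_linear (\<lambda>v. A *v v)" by simp
  have col: "(A ** X)$i$k = (A *v ?c k)$i" for i k
    by (simp add: matrix_matrix_mult_def matrix_vector_mult_def)
  have "(norm (A ** X))\<^sup>2 = (\<Sum>i\<in>UNIV. \<Sum>k\<in>UNIV. ((A ** X)$i$k)\<^sup>2)"
    by (simp add: norm_sq_vec)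
  also have "\<dots> = (\<Sum>k\<in>UNIV. \<Sum>i\<in>UNIV. ((A *v ?c k)$i)\<^sup>2)"
    by (subst sum.swap) (simp add: col)
  also have "\<dots> = (\<Sum>k\<in>UNIV. (norm (A *v ?c k))\<^sup>2)"
    by (simp only: norm_sq_vec real_norm_def power2_abs)
  also have "\<dots> \<le> (\<Sum>k\<in>UNIV. (onorm (\<lambda>v. A *v v) * norm (?c k))\<^sup>2)"
    by (intro sum_mono power_mono onorm[OF bl]) simp
  also have "\<dots> = (onorm (\<lambda>v. A *v v))\<^sup>2 * (\<Sum>k\<in>UNIV. (norm (?c k))\<^sup>2)"
    by (simp add: power_mult_distrib sum_distrib_left)
  also have "(\<Sum>k\<in>UNIV. (norm (?c k))\<^sup>2) = (\<Sum>k\<in>UNIV. \<Sum>i\<in>UNIV. (X$i$k)\<^sup>2)"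
    by (simp add: norm_sq_vec)
  also have "\<dots> = (norm X)\<^sup>2"
    by (subst sum.swap) (simp add: norm_sq_vec)
  finally have "(norm (A ** X))\<^sup>2 \<le> (onorm (\<lambda>v. A *v v) * norm X)\<^sup>2"
    by (simp add: power_mult_distrib)
  moreover have "0 \<le> onorm (\<lambda>v. A *v v) * norm X"
    using onorm_pos_le[OF bl] by simp
  ultimately show ?thesis by (rule power2_le_imp_le)
qed

lemma norm_mm_sq_le: "(norm ((A::real^'n^'n) ** (X::real^'p^'n)))\<^sup>2 \<le> spec_sq A * (norm X)\<^sup>2"
proof -
  have "(norm (A ** X))\<^sup>2 \<le> (onorm (\<lambda>v. A *v v) * norm X)\<^sup>2"
    by (rule power_mono[OF norm_mm_le]) simp
  then show ?thesis by (simp add: spec_sq_def power_mult_distrib)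
qed

definition avg_pres :: "real^'n^'n \<Rightarrow> bool" where
  "avg_pres A \<longleftrightarrow> A ** avgJ = avgJ \<and> avgJ ** A = avgJ"

lemma avgJ_idem: "(avgJ::real^'n^'n) ** avgJ = avgJ"
  by (simp add: vec_eq_iff matrix_matrix_mult_def avgJ_def field_simps)

lemma avg_pres_dev:
  assumes "avg_pres A"
  shows "dev (A ** X) = (A - avgJ) ** dev X"
  using assms unfolding avg_pres_def
  by (simp add: dev_alt mm_diff_left mm_diff_right matrix_mul_assoc avgJ_idem)

lemma avg_pres_one: "avg_pres (mat 1)"
  by (simp add: avg_pres_def)

lemma avg_pres_mult: "avg_pres A \<Longrightarrow> avg_pres B \<Longrightarrow> avg_pres (A ** B)"
  unfolding avg_pres_def by (metis matrix_mul_assoc)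

lemma avg_pres_comb: "avg_pres A \<Longrightarrow> avg_pres B \<Longrightarrow> a - b = 1 \<Longrightarrow> avg_pres (a *\<^sub>R A - b *\<^sub>R B)"
  unfolding avg_pres_def
  by (simp add: mm_diff_left mm_diff_right mm_scaleR_left mm_scaleR_right)
     (metis scaleR_left_diff_distrib scaleR_one)

lemma ds_avg_pres:
  assumes "doubly_stochastic W"
  shows "avg_pres W"
proof -
  have r: "\<And>i. (\<Sum>j\<in>UNIV. W $ i $ j) = 1" and c: "\<And>j. (\<Sum>i\<in>UNIV. W $ i $ j) = 1"
    using assms by (auto simp: doubly_stochastic_def)
  have "W ** avgJ = avgJ"
    by (simp add: vec_eq_iff matrix_matrix_mult_def avgJ_def flip: sum_divide_distrib) (simp add: r)
  moreover have "avgJ ** W = avgJ"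
    by (simp add: vec_eq_iff matrix_matrix_mult_def avgJ_def flip: sum_divide_distrib) (simp add: c)
  ultimately show ?thesis by (simp add: avg_pres_def)
qed

lemma mat_pow_avg_pres: "avg_pres W \<Longrightarrow> avg_pres (mat_pow W k)"
  by (induction k) (auto simp: avg_pres_one avg_pres_mult)

lemma acc_mix_avg_pres: "avg_pres W \<Longrightarrow> avg_pres (acc_mix W eta k)"
proof (induction W eta k rule: acc_mix.induct)
  case (1 W eta) then show ?case by (simp add: avg_pres_one)
next
  case (2 W eta) then show ?case
    by (simp add: avg_pres_comb avg_pres_one)
next
  case (3 W eta s) then show ?case
    by (simp add: avg_pres_comb avg_pres_mult)
qed

lemma cont_nth: "continuous_on UNIV (\<lambda>v::'b::real_normed_vector^'n. v $ i)"
  by (rule linear_continuous_on[OF bounded_linear_vec_nth])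

lemma meas_nth[measurable (raw)]:
  fixes f :: "'a \<Rightarrow> 'b::euclidean_space^'n"
  shows "f \<in> borel_measurable N \<Longrightarrow> (\<lambda>\<omega>. f \<omega> $ i) \<in> borel_measurable N"
  by (rule measurable_compose[OF _ borel_measurable_continuous_onI[OF cont_nth]])

lemma meas_chi[measurable (raw)]:
  fixes f :: "'n::finite \<Rightarrow> 'a \<Rightarrow> 'b::euclidean_space"
  assumes "\<And>i. f i \<in> borel_measurable N"
  shows "(\<lambda>\<omega>. \<chi> i. f i \<omega>) \<in> borel_measurable N"
proof -
  have eq: "(\<lambda>\<omega>. \<chi> i. f i \<omega>) = (\<lambda>\<omega>. \<Sum>j\<in>UNIV. axis j (f j \<omega>))"
    by (auto simp: vec_eq_iff sum_component axis_def if_distrib cong: if_cong)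
  have ca: "continuous_on UNIV (\<lambda>a::'b. axis j a :: 'b^'n)" for j
    unfolding axis_def
  proof (intro continuous_on_vec_lambda)
    fix i show "continuous_on UNIV (\<lambda>a::'b. if i = j then a else 0)"
      by (cases "i = j") (auto intro: continuous_intros)
  qed
  show ?thesis unfolding eq
    by (intro borel_measurable_sum measurable_compose[OF assms borel_measurable_continuous_onI[OF ca]])
qed

lemma meas_mm[measurable (raw)]:
  fixes f :: "'a \<Rightarrow> real^'p^'n"
  shows "f \<in> borel_measurable N \<Longrightarrow> (\<lambda>\<omega>. (A::real^'n^'n) ** f \<omega>) \<in> borel_measurable N"
  unfolding matrix_matrix_mult_def by measurable




locale flex = prob_space M
  for M :: "'a measure"
  and D :: "'n::finite \<Rightarrow> 's measure"
  and \<xi> :: "nat \<Rightarrow> 'n \<Rightarrow> 'a \<Rightarrow> 's"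
  and gf :: "'n \<Rightarrow> real^'p::finite \<Rightarrow> real^'p"
  and g :: "'n \<Rightarrow> real^'p \<Rightarrow> 's \<Rightarrow> real^'p"
  and L \<sigma> :: real +
  assumes distr_xi: "\<And>t i. distr M (D i) (\<xi> t i) = D i"
    and indep: "indep_vars (\<lambda>(t, i). D i) (\<lambda>(t, i). \<xi> t i) UNIV"
    and g_meas: "\<And>i. (\<lambda>(z, s). g i z s) \<in> borel_measurable (borel \<Otimes>\<^sub>M D i)"
    and S: "\<And>i u v. norm (gf i u - gf i v) \<le> L * norm (u - v)"
    and unbiased: "\<And>i z. integrable (D i) (g i z) \<and> (\<integral>s. g i z s \<partial>D i) = gf i z"
    and V: "\<And>i z. integrable (D i) (\<lambda>s. (norm (g i z s - gf i z))\<^sup>2) \<and>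
                  (\<integral>s. (norm (g i z s - gf i z))\<^sup>2 \<partial>D i) \<le> \<sigma>\<^sup>2"
begin

definition RK :: "(nat \<times> 'n) set \<Rightarrow> 'a \<Rightarrow> (nat \<times> 'n) \<Rightarrow> 's" where
  "RK K \<omega> = restrict (\<lambda>p. (\<lambda>(t, i). \<xi> t i) p \<omega>) K"

definition FK :: "(nat \<times> 'n) set \<Rightarrow> 'a measure" where
  "FK K = vimage_algebra (space M) (RK K) (PiM K (\<lambda>(t, i). D i))"

lemma xi_rv: "\<xi> t i \<in> measurable M (D i)"
  using indep unfolding indep_vars_def by (auto dest: bspec[of _ _ "(t,i)"])

lemma RK_rv: "RK K \<in> measurable M (PiM K (\<lambda>(t, i). D i))"
  unfolding RK_def using xi_rv by (intro measurable_restrict) auto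

lemma RK_space: "RK K \<in> space M \<rightarrow> space (PiM K (\<lambda>(t, i). D i))"
  by (auto intro!: measurable_space[OF RK_rv])

lemma D_prob: "prob_space (D i)" 
  using prob_space_distr[OF xi_rv[of 0 i]] distr_xi[of i 0] by simp

lemma xi_FK: "(s, j) \<in> K \<Longrightarrow> \<xi> s j \<in> measurable (FK K) (D j)"
proof -
  assume sj: "(s, j) \<in> K"
  have "(\<lambda>\<omega>. RK K \<omega> (s, j)) \<in> measurable (FK K) ((\<lambda>(t, i). D i) (s, j))"
    unfolding FK_def
    by (rule measurable_compose[OF measurable_vimage_algebra1[OF RK_space] measurable_component_singleton[OF sj]])
  moreover have "\<And>\<omega>. RK K \<omega> (s, j) = \<xi> s j \<omega>" using sj by (simp add: RK_def)
  ultimately show ?thesis by simp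
qed

lemma FK_sub: "subalgebra M (FK K)"
  unfolding subalgebra_def FK_def using RK_rv
  by (auto simp: sets_vimage_algebra2[OF RK_space] measurable_def)

lemma FK_meas: "f \<in> measurable (FK K) N \<Longrightarrow> f \<in> measurable M N"
  by (rule measurable_from_subalg[OF FK_sub])

lemma space_FK[simp]: "space (FK K) = space M"
  by (simp add: FK_def)

lemma indep_FK:
  assumes ti: "(t, i) \<notin> K" and W: "W \<in> measurable (FK K) N"
  shows "distr M N W \<Otimes>\<^sub>M D i = distr M (N \<Otimes>\<^sub>M D i) (\<lambda>x. (W x, \<xi> t i x))"
proof -
  have ind: "indep_var (PiM K (\<lambda>(t, i). D i)) (RK K) (PiM {(t,i)} (\<lambda>(t, i). D i)) (RK {(t,i)})"
    unfolding RK_def using ti by (intro indep_var_restrict[OF indep]) auto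
  have xiF: "\<xi> t i \<in> measurable (FK {(t,i)}) (D i)"
    by (rule xi_FK) simp
  show ?thesis
    using indep_var_vimage[OF ind W[unfolded FK_def] xiF[unfolded FK_def]] distr_xi[of i t] by simp
qed

lemma gf_lip: "\<bar>L\<bar>-lipschitz_on UNIV (gf i)"
  by (rule lipschitz_onI) (use S[of i] in \<open>auto simp: dist_norm intro: order_trans[OF _ mult_right_mono[OF abs_ge_self]]\<close>)

lemma gf_meas[measurable]: "gf i \<in> borel_measurable borel"
  by (rule borel_measurable_continuous_onI[OF lipschitz_on_continuous_on[OF gf_lip]])

lemma g_meas'[measurable]: "(\<lambda>p. g i (fst p) (snd p)) \<in> borel_measurable (borel \<Otimes>\<^sub>M D i)"
  using g_meas[of i] by (simp add: case_prod_beta')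

lemma g_comp[measurable (raw)]:
  assumes "f \<in> borel_measurable N" "u \<in> measurable N (D i)"
  shows "(\<lambda>x. g i (f x) (u x)) \<in> borel_measurable N"
  using measurable_compose[OF measurable_Pair[OF assms] g_meas'[of i]] by simp

lemma gf_comp[measurable (raw)]:
  assumes "f \<in> borel_measurable N"
  shows "(\<lambda>x. gf i (f x)) \<in> borel_measurable N"
  using measurable_compose[OF assms gf_meas] .

lemma h_meas: "(\<lambda>p. (norm (g i (fst p) (snd p) - gf i (fst p)))\<^sup>2) \<in> borel_measurable (borel \<Otimes>\<^sub>M D i)"
  by measurable

lemma KL1:
  assumes ti: "(t, i) \<notin> K" and Z: "Z \<in> borel_measurable (FK K)"
  shows "integrable M (\<lambda>\<omega>. (norm (g i (Z \<omega>) (\<xi> t i \<omega>) - gf i (Z \<omega>)))\<^sup>2)"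
    and "(\<integral>\<omega>. (norm (g i (Z \<omega>) (\<xi> t i \<omega>) - gf i (Z \<omega>)))\<^sup>2 \<partial>M) \<le> \<sigma>\<^sup>2"
proof -
  let ?P = "distr M borel Z"
  let ?h = "\<lambda>p. (norm (g i (fst p) (snd p) - gf i (fst p)))\<^sup>2"
  have ZM[measurable]: "Z \<in> borel_measurable M" using FK_meas[OF Z] .
  have xiM[measurable]: "\<xi> t i \<in> measurable M (D i)" by (rule xi_rv)
  have prodeq: "?P \<Otimes>\<^sub>M D i = distr M (borel \<Otimes>\<^sub>M D i) (\<lambda>\<omega>. (Z \<omega>, \<xi> t i \<omega>))"
    by (rule indep_FK[OF ti Z])
  interpret P: prob_space ?P by (rule prob_space_distr) simp
  interpret Di: prob_space "D i" by (rule D_prob)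
  interpret PD: pair_sigma_finite ?P "D i" by unfold_locales
  have hm[measurable]: "?h \<in> borel_measurable (borel \<Otimes>\<^sub>M D i)" by (rule h_meas)
  have "(\<integral>\<^sup>+\<omega>. ennreal (?h (Z \<omega>, \<xi> t i \<omega>)) \<partial>M)
      = (\<integral>\<^sup>+p. ennreal (?h p) \<partial>distr M (borel \<Otimes>\<^sub>M D i) (\<lambda>\<omega>. (Z \<omega>, \<xi> t i \<omega>)))"
    by (subst nn_integral_distr) auto
  also have "\<dots> = (\<integral>\<^sup>+p. ennreal (?h p) \<partial>(?P \<Otimes>\<^sub>M D i))" by (simp add: prodeq)
  also have "\<dots> = (\<integral>\<^sup>+z. \<integral>\<^sup>+s. ennreal (?h (z, s)) \<partial>D i \<partial>?P)"
    by (rule Di.nn_integral_fst[symmetric]) measurable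
  also have "\<dots> \<le> (\<integral>\<^sup>+z. ennreal (\<sigma>\<^sup>2) \<partial>?P)"
  proof (rule nn_integral_mono)
    fix z
    have "(\<integral>\<^sup>+s. ennreal (?h (z, s)) \<partial>D i) = ennreal (\<integral>s. ?h (z, s) \<partial>D i)"
      using V[of i z] by (intro nn_integral_eq_integral) auto
    also have "\<dots> \<le> ennreal (\<sigma>\<^sup>2)" using V[of i z] by (intro ennreal_leI) simp
    finally show "(\<integral>\<^sup>+s. ennreal (?h (z, s)) \<partial>D i) \<le> ennreal (\<sigma>\<^sup>2)" .
  qed
  also have "\<dots> = ennreal (\<sigma>\<^sup>2)" using P.emeasure_space_1 by simp
  finally have fin: "(\<integral>\<^sup>+\<omega>. ennreal (?h (Z \<omega>, \<xi> t i \<omega>)) \<partial>M) \<le> ennreal (\<sigma>\<^sup>2)" .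
  let ?f = "\<lambda>\<omega>. (norm (g i (Z \<omega>) (\<xi> t i \<omega>) - gf i (Z \<omega>)))\<^sup>2"
  have hM: "?f \<in> borel_measurable M" using hm by measurable
  have fin': "(\<integral>\<^sup>+\<omega>. ennreal (?f \<omega>) \<partial>M) \<le> ennreal (\<sigma>\<^sup>2)" using fin by simp
  show int: "integrable M (\<lambda>\<omega>. (norm (g i (Z \<omega>) (\<xi> t i \<omega>) - gf i (Z \<omega>)))\<^sup>2)"
  proof (rule integrableI_bounded[OF hM])
    have "(\<integral>\<^sup>+\<omega>. ennreal (norm (?f \<omega>)) \<partial>M) = (\<integral>\<^sup>+\<omega>. ennreal (?f \<omega>) \<partial>M)"
      by simp
    also have "\<dots> < \<infinity>" using fin' by (simp add: le_less_trans)
    finally show "(\<integral>\<^sup>+\<omega>. ennreal (norm (?f \<omega>)) \<partial>M) < \<infinity>" .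
  qed
  have "ennreal (\<integral>\<omega>. (norm (g i (Z \<omega>) (\<xi> t i \<omega>) - gf i (Z \<omega>)))\<^sup>2 \<partial>M) \<le> ennreal (\<sigma>\<^sup>2)"
    using fin' by (subst nn_integral_eq_integral[OF int, symmetric]) auto
  then show "(\<integral>\<omega>. (norm (g i (Z \<omega>) (\<xi> t i \<omega>) - gf i (Z \<omega>)))\<^sup>2 \<partial>M) \<le> \<sigma>\<^sup>2"
    by (auto simp: ennreal_le_iff2 ennreal_le_iff)
qed

lemma inner_le_sq: "\<bar>(a::'v::real_inner) \<bullet> b\<bar> \<le> (norm a)\<^sup>2 + (norm b)\<^sup>2"
proof -
  have "\<bar>a \<bullet> b\<bar> \<le> norm a * norm b" by (rule Cauchy_Schwarz_ineq2)
  also have "\<dots> \<le> (norm a)\<^sup>2 + (norm b)\<^sup>2"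
  proof -
    have "0 \<le> (norm a - norm b)\<^sup>2" by simp
    then have "2 * (norm a * norm b) \<le> (norm a)\<^sup>2 + (norm b)\<^sup>2" by (simp add: power2_diff)
    moreover have "0 \<le> norm a * norm b" by simp
    ultimately show ?thesis by linarith
  qed
  finally show ?thesis .
qed

lemma KL2:
  assumes ti: "(t, i) \<notin> K" and Z: "Z \<in> borel_measurable (FK K)"
    and a: "a \<in> borel_measurable (FK K)" and asq: "integrable M (\<lambda>\<omega>. (norm (a \<omega>))\<^sup>2)"
  shows "integrable M (\<lambda>\<omega>. a \<omega> \<bullet> (g i (Z \<omega>) (\<xi> t i \<omega>) - gf i (Z \<omega>)))"
    and "(\<integral>\<omega>. a \<omega> \<bullet> (g i (Z \<omega>) (\<xi> t i \<omega>) - gf i (Z \<omega>)) \<partial>M) = 0"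
proof -
  let ?W = "\<lambda>\<omega>. (a \<omega>, Z \<omega>)"
  let ?P = "distr M borel ?W"
  let ?h = "\<lambda>p. fst (fst p) \<bullet> (g i (snd (fst p)) (snd p) - gf i (snd (fst p)))"
  let ?f = "\<lambda>\<omega>. a \<omega> \<bullet> (g i (Z \<omega>) (\<xi> t i \<omega>) - gf i (Z \<omega>))"
  have WF: "?W \<in> borel_measurable (FK K)" using a Z by (rule borel_measurable_Pair)
  have ZM[measurable]: "Z \<in> borel_measurable M" using FK_meas[OF Z] .
  have aM[measurable]: "a \<in> borel_measurable M" using FK_meas[OF a] .
  have xiM[measurable]: "\<xi> t i \<in> measurable M (D i)" by (rule xi_rv)
  have WM[measurable]: "?W \<in> borel_measurable M" by measurable
  have prodeq: "?P \<Otimes>\<^sub>M D i = distr M (borel \<Otimes>\<^sub>M D i) (\<lambda>\<omega>. (?W \<omega>, \<xi> t i \<omega>))"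
    by (rule indep_FK[OF ti WF])
  interpret P: prob_space ?P by (rule prob_space_distr) simp
  interpret Di: prob_space "D i" by (rule D_prob)
  interpret PD: pair_sigma_finite ?P "D i" by unfold_locales
  have f1[measurable]: "(\<lambda>p::(((real^'p) \<times> (real^'p)) \<times> 's). fst (fst p)) \<in> borel_measurable (borel \<Otimes>\<^sub>M D i)"
    by (rule measurable_compose[OF measurable_fst borel_measurable_continuous_onI]) (intro continuous_intros)
  have f2[measurable]: "(\<lambda>p::(((real^'p) \<times> (real^'p)) \<times> 's). snd (fst p)) \<in> borel_measurable (borel \<Otimes>\<^sub>M D i)"
    by (rule measurable_compose[OF measurable_fst borel_measurable_continuous_onI]) (intro continuous_intros)
  have hm[measurable]: "?h \<in> borel_measurable (borel \<Otimes>\<^sub>M D i)" by measurable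
  have fM: "?f \<in> borel_measurable M" by measurable
  have int: "integrable M ?f"
  proof (rule Bochner_Integration.integrable_bound[OF _ fM])
    show "integrable M (\<lambda>\<omega>. (norm (a \<omega>))\<^sup>2 + (norm (g i (Z \<omega>) (\<xi> t i \<omega>) - gf i (Z \<omega>)))\<^sup>2)"
      using asq KL1(1)[OF ti Z] by (rule Bochner_Integration.integrable_add)
    show "AE x in M. norm (?f x) \<le> norm ((norm (a x))\<^sup>2 + (norm (g i (Z x) (\<xi> t i x) - gf i (Z x)))\<^sup>2)"
    proof (rule AE_I2)
      fix x
      have "norm (?f x) \<le> (norm (a x))\<^sup>2 + (norm (g i (Z x) (\<xi> t i x) - gf i (Z x)))\<^sup>2"
        using inner_le_sq[of "a x" "g i (Z x) (\<xi> t i x) - gf i (Z x)"] by simp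
      then show "norm (?f x) \<le> norm ((norm (a x))\<^sup>2 + (norm (g i (Z x) (\<xi> t i x) - gf i (Z x)))\<^sup>2)"
        by simp
    qed
  qed
  then show "integrable M ?f" .
  have PM: "(\<lambda>\<omega>. (?W \<omega>, \<xi> t i \<omega>)) \<in> measurable M (borel \<Otimes>\<^sub>M D i)" by measurable
  have intd: "integrable (?P \<Otimes>\<^sub>M D i) ?h"
    unfolding prodeq using int by (subst integrable_distr_eq[OF PM hm]) simp
  have "(\<integral>\<omega>. ?f \<omega> \<partial>M) = (\<integral>p. ?h p \<partial>distr M (borel \<Otimes>\<^sub>M D i) (\<lambda>\<omega>. (?W \<omega>, \<xi> t i \<omega>)))"
    by (subst integral_distr[OF PM hm]) simp
  also have "\<dots> = (\<integral>p. ?h p \<partial>(?P \<Otimes>\<^sub>M D i))" by (simp add: prodeq)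
  also have "\<dots> = (\<integral>w. \<integral>s. ?h (w, s) \<partial>D i \<partial>?P)"
    by (rule PD.integral_fst'[OF intd, symmetric])
  also have "\<dots> = (\<integral>w. 0 \<partial>?P)"
  proof (rule Bochner_Integration.integral_cong[OF refl])
    fix w :: "(real^'p) \<times> (real^'p)"
    have i1: "integrable (D i) (\<lambda>s. g i (snd w) s - gf i (snd w))"
      using unbiased[of i "snd w"] by auto
    have "(\<integral>s. ?h (w, s) \<partial>D i) = fst w \<bullet> (\<integral>s. g i (snd w) s - gf i (snd w) \<partial>D i)"
      using i1 by simp
    also have "(\<integral>s. g i (snd w) s - gf i (snd w) \<partial>D i) = 0"
      using unbiased[of i "snd w"] by (simp add: Di.prob_space)
    finally show "(\<integral>s. ?h (w, s) \<partial>D i) = 0" by simp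
  qed
  also have "\<dots> = 0" by simp
  finally show "(\<integral>\<omega>. ?f \<omega> \<partial>M) = 0" .
qed

end



locale flex2 = flex M D \<xi> gf g L \<sigma>
  for M :: "'a measure"
  and D :: "'n::finite \<Rightarrow> 's measure"
  and \<xi> :: "nat \<Rightarrow> 'n \<Rightarrow> 'a \<Rightarrow> 's"
  and gf :: "'n \<Rightarrow> real^'p::finite \<Rightarrow> real^'p"
  and g :: "'n \<Rightarrow> real^'p \<Rightarrow> 's \<Rightarrow> real^'p"
  and L \<sigma> :: real +
  fixes Wbar :: "real^'n^'n" and \<gamma> :: real and \<beta> :: nat and x0 :: "real^'p^'n"
    and x y :: "nat \<Rightarrow> 'a \<Rightarrow> real^'p^'n"
  assumes Wp: "avg_pres Wbar" and rho: "spec_sq (Wbar - avgJ) < 1" and beta: "1 \<le> \<beta>"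
    and x_init: "\<And>\<omega>. x 0 \<omega> = x0"
    and y_init: "\<And>\<omega>. y 0 \<omega> = (\<chi> i. g i (x 0 \<omega> $ i) (\<xi> 0 i \<omega>))"
    and x_inner: "\<And>k j \<omega>. j + 2 \<le> \<beta> \<Longrightarrow>
       x (\<beta> * k + j + 1) \<omega> = x (\<beta> * k + j) \<omega> - \<gamma> *\<^sub>R y (\<beta> * k + j) \<omega>"
    and y_inner: "\<And>k j \<omega>. j + 2 \<le> \<beta> \<Longrightarrow>
       y (\<beta> * k + j + 1) \<omega> = y (\<beta> * k + j) \<omega>
         + (\<chi> i. g i (x (\<beta> * ((\<beta> * k + j + 1) div \<beta>)) \<omega> $ i) (\<xi> (\<beta> * k + j + 1) i \<omega>))
         - (\<chi> i. g i (x (\<beta> * ((\<beta> * k + j) div \<beta>)) \<omega> $ i) (\<xi> (\<beta> * k + j) i \<omega>))"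
    and x_round: "\<And>k \<omega>.
       x (\<beta> * (k + 1)) \<omega> = Wbar ** (x (\<beta> * k) \<omega> - \<gamma> *\<^sub>R (\<Sum>j<\<beta>. y (\<beta> * k + j) \<omega>))"
    and y_round: "\<And>k \<omega>.
       y (\<beta> * (k + 1)) \<omega> = Wbar ** (y (\<beta> * k) \<omega>
         + (\<chi> i. g i (x (\<beta> * ((\<beta> * (k + 1)) div \<beta>)) \<omega> $ i) (\<xi> (\<beta> * (k + 1)) i \<omega>))
         - (\<chi> i. g i (x (\<beta> * ((\<beta> * k) div \<beta>)) \<omega> $ i) (\<xi> (\<beta> * k) i \<omega>)))"
begin

definition Gv :: "nat \<Rightarrow> 'a \<Rightarrow> real^'p^'n" where
  "Gv t \<omega> = (\<chi> i. g i (x (\<beta> * (t div \<beta>)) \<omega> $ i) (\<xi> t i \<omega>))"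

definition er :: "nat \<Rightarrow> 'n \<Rightarrow> 'a \<Rightarrow> real^'p" where
  "er t i \<omega> = g i (x (\<beta> * (t div \<beta>)) \<omega> $ i) (\<xi> t i \<omega>) - gf i (x (\<beta> * (t div \<beta>)) \<omega> $ i)"

definition Ev :: "nat \<Rightarrow> 'a \<Rightarrow> real^'p^'n" where
  "Ev t \<omega> = (\<chi> i. er t i \<omega>)"

lemma y_inner': "j + 2 \<le> \<beta> \<Longrightarrow> y (\<beta> * k + j + 1) \<omega> = y (\<beta> * k + j) \<omega> + Gv (\<beta> * k + j + 1) \<omega> - Gv (\<beta> * k + j) \<omega>"
  unfolding Gv_def by (rule y_inner)

lemma y_round': "y (\<beta> * (k + 1)) \<omega> = Wbar ** (y (\<beta> * k) \<omega> + Gv (\<beta> * (k + 1)) \<omega> - Gv (\<beta> * k) \<omega>)"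
  unfolding Gv_def by (rule y_round)

lemma y_init': "y 0 \<omega> = Gv 0 \<omega>"
  unfolding Gv_def by (simp add: y_init)

lemma t_cases:
  obtains "t = 0" | k j where "j + 2 \<le> \<beta>" "t = \<beta> * k + j + 1" | k where "t = \<beta> * (k + 1)"
proof (cases "t = 0")
  case True then show ?thesis using that(1) by simp
next
  case False
  define k where "k = (t - 1) div \<beta>"
  define j where "j = (t - 1) mod \<beta>"
  have tk: "t = \<beta> * k + j + 1" using False unfolding k_def j_def by simp
  have jb: "j < \<beta>" using beta unfolding j_def by simp
  show ?thesis
  proof (cases "j + 2 \<le> \<beta>")
    case True then show ?thesis using that(2) tk by blast
  next
    case False
    then have "j + 1 = \<beta>" using jb by simp
    then have "t = \<beta> * (k + 1)" using tk by (simp add: algebra_simps)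
    then show ?thesis using that(3) by blast
  qed
qed

lemma div_le: "\<beta> * (t div \<beta>) \<le> t"
  by simp

lemma Gv_FK:
  assumes K: "\<And>s j. s \<le> t \<Longrightarrow> (s, j) \<in> K" and X: "x (\<beta> * (t div \<beta>)) \<in> borel_measurable (FK K)"
  shows "Gv t \<in> borel_measurable (FK K)"
proof -
  have [measurable]: "\<xi> t i \<in> measurable (FK K) (D i)" for i using K by (intro xi_FK) simp
  note X[measurable]
  show ?thesis unfolding Gv_def by measurable
qed

lemma er_FK:
  assumes K: "\<And>s j. s \<le> t \<Longrightarrow> (s, j) \<in> K" and X: "x (\<beta> * (t div \<beta>)) \<in> borel_measurable (FK K)"
  shows "er t i \<in> borel_measurable (FK K)"
proof -
  have [measurable]: "\<xi> t i \<in> measurable (FK K) (D i)" for i using K by (intro xi_FK) simp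
  note X[measurable]
  show ?thesis unfolding er_def by measurable
qed

lemma meas_all:
  "(\<forall>K. (\<forall>s j. s < t \<longrightarrow> (s, j) \<in> K) \<longrightarrow> x t \<in> borel_measurable (FK K)) \<and>
   (\<forall>K. (\<forall>s j. s \<le> t \<longrightarrow> (s, j) \<in> K) \<longrightarrow> y t \<in> borel_measurable (FK K))"
proof (induction t rule: less_induct)
  case (less t)
  have IHx: "x t' \<in> borel_measurable (FK K)" if "t' < t" "\<And>s j. s < t' \<Longrightarrow> (s, j) \<in> K" for t' K
    using less that by blast
  have IHy: "y t' \<in> borel_measurable (FK K)" if "t' < t" "\<And>s j. s \<le> t' \<Longrightarrow> (s, j) \<in> K" for t' K
    using less that by blast
  have X: "x t \<in> borel_measurable (FK K)" if K: "\<And>s j. s < t \<Longrightarrow> (s, j) \<in> K" for K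
  proof (cases t rule: t_cases)
    case 1
    have "x 0 = (\<lambda>_. x0)" using x_init by auto
    then show ?thesis using 1 by simp
  next
    case (2 k j)
    have [measurable]: "x (\<beta> * k + j) \<in> borel_measurable (FK K)"
      using 2 K by (intro IHx) auto
    have [measurable]: "y (\<beta> * k + j) \<in> borel_measurable (FK K)"
      using 2 K by (intro IHy) auto
    have eq: "x t = (\<lambda>\<omega>. x (\<beta> * k + j) \<omega> - \<gamma> *\<^sub>R y (\<beta> * k + j) \<omega>)"
      using x_inner[OF 2(1)] 2(2) by auto
    show ?thesis unfolding eq by measurable
  next
    case (3 k)
    have [measurable]: "x (\<beta> * k) \<in> borel_measurable (FK K)"
      using 3 K beta by (intro IHx) auto
    have [measurable]: "y (\<beta> * k + j) \<in> borel_measurable (FK K)" if "j < \<beta>" for j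
      using 3 K that by (intro IHy) auto
    have "(\<lambda>\<omega>. Wbar ** (x (\<beta> * k) \<omega> - \<gamma> *\<^sub>R (\<Sum>j<\<beta>. y (\<beta> * k + j) \<omega>))) \<in> borel_measurable (FK K)"
      by measurable
    moreover have "x t = (\<lambda>\<omega>. Wbar ** (x (\<beta> * k) \<omega> - \<gamma> *\<^sub>R (\<Sum>j<\<beta>. y (\<beta> * k + j) \<omega>)))"
      using x_round 3 by auto
    ultimately show ?thesis by simp
  qed
  have Y: "y t \<in> borel_measurable (FK K)" if K: "\<And>s j. s \<le> t \<Longrightarrow> (s, j) \<in> K" for K
  proof -
    have XX: "x t' \<in> borel_measurable (FK K)" if "t' \<le> t" for t'
    proof (cases "t' < t")
      case True then show ?thesis using K by (intro IHx) auto
    next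
      case False then have "t' = t" using that by simp
      moreover have "x t \<in> borel_measurable (FK K)" using K by (intro X) auto
      ultimately show ?thesis by simp
    qed
    have G: "Gv t' \<in> borel_measurable (FK K)" if "t' \<le> t" for t'
      using that K by (intro Gv_FK XX) (auto intro: order_trans[OF div_le])
    show ?thesis
    proof (cases t rule: t_cases)
      case 1
      have "y 0 = Gv 0" using y_init' by auto
      then show ?thesis using G[of 0] 1 by simp
    next
      case (2 k j)
      have [measurable]: "y (\<beta> * k + j) \<in> borel_measurable (FK K)"
        using 2 K by (intro IHy) auto
      have [measurable]: "Gv (\<beta> * k + j) \<in> borel_measurable (FK K)" "Gv (\<beta> * k + j + 1) \<in> borel_measurable (FK K)"
        using 2 by (auto intro!: G)
      have eq: "y t = (\<lambda>\<omega>. y (\<beta> * k + j) \<omega> + Gv (\<beta> * k + j + 1) \<omega> - Gv (\<beta> * k + j) \<omega>)"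
        using y_inner'[OF 2(1)] 2(2) by auto
      show ?thesis unfolding eq by measurable
    next
      case (3 k)
      have [measurable]: "y (\<beta> * k) \<in> borel_measurable (FK K)"
        using 3 K beta by (intro IHy) auto
      have [measurable]: "Gv (\<beta> * k) \<in> borel_measurable (FK K)" "Gv (\<beta> * (k + 1)) \<in> borel_measurable (FK K)"
        using 3 by (auto intro!: G)
      have "(\<lambda>\<omega>. Wbar ** (y (\<beta> * k) \<omega> + Gv (\<beta> * (k + 1)) \<omega> - Gv (\<beta> * k) \<omega>)) \<in> borel_measurable (FK K)"
        by measurable
      moreover have "y t = (\<lambda>\<omega>. Wbar ** (y (\<beta> * k) \<omega> + Gv (\<beta> * (k + 1)) \<omega> - Gv (\<beta> * k) \<omega>))"
        using y_round' 3 by auto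
      ultimately show ?thesis by simp
    qed
  qed
  show ?case using X Y by blast
qed

lemma x_FK: "(\<And>s j. s < t \<Longrightarrow> (s, j) \<in> K) \<Longrightarrow> x t \<in> borel_measurable (FK K)"
  using meas_all by blast
lemma y_FK: "(\<And>s j. s \<le> t \<Longrightarrow> (s, j) \<in> K) \<Longrightarrow> y t \<in> borel_measurable (FK K)"
  using meas_all by blast
lemma x_M[measurable]: "x t \<in> borel_measurable M"
  by (rule FK_meas[OF x_FK[of t UNIV]]) simp
lemma y_M[measurable]: "y t \<in> borel_measurable M"
  by (rule FK_meas[OF y_FK[of t UNIV]]) simp
lemma Gv_M[measurable]: "Gv t \<in> borel_measurable M"
  by (rule FK_meas[OF Gv_FK[of t UNIV]]) (auto intro: x_FK)
lemma er_M[measurable]: "er t i \<in> borel_measurable M"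
  by (rule FK_meas[OF er_FK[of t UNIV]]) (auto intro: x_FK)

end



lemma my_nth_le: "norm ((v::'b::real_normed_vector^'n) $ i) \<le> norm v"
  unfolding norm_vec_def by (rule member_le_L2_set) simp_all

definition sq :: "'a measure \<Rightarrow> ('a \<Rightarrow> 'b::real_normed_vector) \<Rightarrow> bool" where
  "sq N f \<longleftrightarrow> integrable N (\<lambda>\<omega>. (norm (f \<omega>))\<^sup>2)"

lemma sq_bound:
  fixes f :: "'a \<Rightarrow> 'b::euclidean_space"
  assumes "f \<in> borel_measurable N" "integrable N h" "\<And>\<omega>. (norm (f \<omega>))\<^sup>2 \<le> h \<omega>"
  shows "sq N f"
  unfolding sq_def
proof (rule Bochner_Integration.integrable_bound[OF assms(2)])
  show "(\<lambda>\<omega>. (norm (f \<omega>))\<^sup>2) \<in> borel_measurable N" using assms(1) by measurable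
  show "AE \<omega> in N. norm ((norm (f \<omega>))\<^sup>2) \<le> norm (h \<omega>)"
    using assms(3) by (auto intro!: AE_I2 order_trans[OF _ abs_ge_self])
qed

lemma sq_add:
  fixes f g :: "'a \<Rightarrow> 'b::euclidean_space"
  assumes [measurable]: "f \<in> borel_measurable N" "g \<in> borel_measurable N" and "sq N f" "sq N g"
  shows "sq N (\<lambda>\<omega>. f \<omega> + g \<omega>)"
proof (rule sq_bound)
  show "integrable N (\<lambda>\<omega>. 2 * (norm (f \<omega>))\<^sup>2 + 2 * (norm (g \<omega>))\<^sup>2)"
    using assms(3,4) unfolding sq_def by auto
  fix \<omega>
  have "norm (f \<omega> + g \<omega>) \<le> norm (f \<omega>) + norm (g \<omega>)" by (rule norm_triangle_ineq)
  then have "(norm (f \<omega> + g \<omega>))\<^sup>2 \<le> (norm (f \<omega>) + norm (g \<omega>))\<^sup>2" by (simp add: power_mono)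
  also have "\<dots> \<le> 2 * (norm (f \<omega>))\<^sup>2 + 2 * (norm (g \<omega>))\<^sup>2"
    using sum_squares_bound[of "norm (f \<omega>)" "norm (g \<omega>)"] by (simp add: power2_sum)
  finally show "(norm (f \<omega> + g \<omega>))\<^sup>2 \<le> 2 * (norm (f \<omega>))\<^sup>2 + 2 * (norm (g \<omega>))\<^sup>2" .
qed simp

lemma sq_scaleR:
  fixes f :: "'a \<Rightarrow> 'b::euclidean_space"
  assumes "sq N f" shows "sq N (\<lambda>\<omega>. c *\<^sub>R f \<omega>)"
  using assms unfolding sq_def by (simp add: power_mult_distrib)

lemma sq_uminus:
  fixes f :: "'a \<Rightarrow> 'b::euclidean_space"
  assumes "sq N f" shows "sq N (\<lambda>\<omega>. - f \<omega>)"
  using assms unfolding sq_def by simp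

lemma sq_diff:
  fixes f g :: "'a \<Rightarrow> 'b::euclidean_space"
  assumes [measurable]: "f \<in> borel_measurable N" "g \<in> borel_measurable N" and "sq N f" "sq N g"
  shows "sq N (\<lambda>\<omega>. f \<omega> - g \<omega>)"
  using sq_add[of f N "\<lambda>\<omega>. - g \<omega>"] sq_uminus[OF assms(4)] assms by simp

lemma sq_sum:
  fixes f :: "'i \<Rightarrow> 'a \<Rightarrow> 'b::euclidean_space"
  assumes "\<And>j. j \<in> S \<Longrightarrow> f j \<in> borel_measurable N" "\<And>j. j \<in> S \<Longrightarrow> sq N (f j)"
  shows "sq N (\<lambda>\<omega>. \<Sum>j\<in>S. f j \<omega>)"
  using assms
proof (induction S rule: infinite_finite_induct)
  case (insert a F)
  have m: "(\<lambda>\<omega>. \<Sum>j\<in>F. f j \<omega>) \<in> borel_measurable N"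
    using insert.prems by (intro borel_measurable_sum) auto
  show ?case using insert sq_add[OF _ m, of "f a"] by simp
qed (auto simp: sq_def)

lemma sq_mm:
  fixes f :: "'a \<Rightarrow> real^'p^'n"
  assumes "f \<in> borel_measurable N" "sq N f"
  shows "sq N (\<lambda>\<omega>. (A::real^'n^'n) ** f \<omega>)"
proof (rule sq_bound)
  show "(\<lambda>\<omega>. A ** f \<omega>) \<in> borel_measurable N" using assms(1) by measurable
  show "integrable N (\<lambda>\<omega>. spec_sq A * (norm (f \<omega>))\<^sup>2)" using assms(2) unfolding sq_def by auto
  show "(norm (A ** f \<omega>))\<^sup>2 \<le> spec_sq A * (norm (f \<omega>))\<^sup>2" for \<omega> by (rule norm_mm_sq_le)
qed

lemma sq_chi:
  fixes f :: "'n::finite \<Rightarrow> 'a \<Rightarrow> 'b::euclidean_space"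
  assumes "\<And>i. sq N (f i)"
  shows "sq N (\<lambda>\<omega>. \<chi> i. f i \<omega>)"
  using assms unfolding sq_def by (simp add: norm_sq_vec)

lemma sq_nth:
  fixes f :: "'a \<Rightarrow> 'b::euclidean_space^'n"
  assumes "f \<in> borel_measurable N" "sq N f"
  shows "sq N (\<lambda>\<omega>. f \<omega> $ i)"
proof (rule sq_bound)
  show "(\<lambda>\<omega>. f \<omega> $ i) \<in> borel_measurable N" using assms(1) by measurable
  show "integrable N (\<lambda>\<omega>. (norm (f \<omega>))\<^sup>2)" using assms(2) unfolding sq_def .
  show "(norm (f \<omega> $ i))\<^sup>2 \<le> (norm (f \<omega>))\<^sup>2" for \<omega>
    using my_nth_le[of "f \<omega>" i] by (intro power_mono) auto
qed

lemma sq_dev: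
  fixes f :: "'a \<Rightarrow> real^'p^'n"
  assumes "f \<in> borel_measurable N" "sq N f"
  shows "sq N (\<lambda>\<omega>. dev (f \<omega>))"
proof (rule sq_bound)
  show "(\<lambda>\<omega>. dev (f \<omega>)) \<in> borel_measurable N" using assms(1) unfolding dev_alt by measurable
  show "integrable N (\<lambda>\<omega>. (norm (f \<omega>))\<^sup>2)" using assms(2) unfolding sq_def .
  show "(norm (dev (f \<omega>)))\<^sup>2 \<le> (norm (f \<omega>))\<^sup>2" for \<omega>
    by (simp add: power_mono norm_dev_le)
qed

context flex2 begin

lemma sq_const: "sq M (\<lambda>_. c)"
  unfolding sq_def by simp

lemma er_bound:
  shows "sq M (er t i)" and "(\<integral>\<omega>. (norm (er t i \<omega>))\<^sup>2 \<partial>M) \<le> \<sigma>\<^sup>2"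
proof -
  let ?K = "{(s, j). s < t}"
  have Z: "(\<lambda>\<omega>. x (\<beta> * (t div \<beta>)) \<omega> $ i) \<in> borel_measurable (FK ?K)"
  proof -
    have "x (\<beta> * (t div \<beta>)) \<in> borel_measurable (FK ?K)"
      by (rule x_FK) (auto intro: less_le_trans[OF _ div_le])
    then show ?thesis by measurable
  qed
  have ti: "(t, i) \<notin> ?K" by simp
  show "sq M (er t i)" using KL1(1)[OF ti Z] unfolding sq_def er_def .
  show "(\<integral>\<omega>. (norm (er t i \<omega>))\<^sup>2 \<partial>M) \<le> \<sigma>\<^sup>2" using KL1(2)[OF ti Z] unfolding er_def .
qed

lemma sq_gf:
  assumes [measurable]: "X \<in> borel_measurable M" and "sq M X"
  shows "sq M (\<lambda>\<omega>. gf i (X \<omega> $ i))"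
proof (rule sq_bound)
  show "(\<lambda>\<omega>. gf i (X \<omega> $ i)) \<in> borel_measurable M" by measurable
  show "integrable M (\<lambda>\<omega>. 2 * (norm (gf i 0))\<^sup>2 + 2 * L\<^sup>2 * (norm (X \<omega>))\<^sup>2)"
    using assms(2) unfolding sq_def by auto
  fix \<omega>
  have "norm (gf i (X \<omega> $ i)) \<le> norm (gf i 0) + norm (gf i (X \<omega> $ i) - gf i 0)"
    by (rule norm_triangle_sub)
  also have "norm (gf i (X \<omega> $ i) - gf i 0) \<le> \<bar>L\<bar> * norm (X \<omega> $ i)"
    using S[of i "X \<omega> $ i" 0] by (simp add: order_trans[OF _ mult_right_mono[OF abs_ge_self]])
  also have "\<dots> \<le> \<bar>L\<bar> * norm (X \<omega>)" using my_nth_le[of "X \<omega>" i] by (intro mult_left_mono) auto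
  finally have "norm (gf i (X \<omega> $ i)) \<le> norm (gf i 0) + \<bar>L\<bar> * norm (X \<omega>)" by simp
  then have "(norm (gf i (X \<omega> $ i)))\<^sup>2 \<le> (norm (gf i 0) + \<bar>L\<bar> * norm (X \<omega>))\<^sup>2"
    by (simp add: power_mono)
  also have "\<dots> \<le> 2 * (norm (gf i 0))\<^sup>2 + 2 * (\<bar>L\<bar> * norm (X \<omega>))\<^sup>2"
    using sum_squares_bound[of "norm (gf i 0)" "\<bar>L\<bar> * norm (X \<omega>)"] by (simp add: power2_sum)
  finally show "(norm (gf i (X \<omega> $ i)))\<^sup>2 \<le> 2 * (norm (gf i 0))\<^sup>2 + 2 * L\<^sup>2 * (norm (X \<omega>))\<^sup>2"
    by (simp add: power_mult_distrib)
qed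

lemma Gv_split: "Gv t \<omega> = (\<chi> i. gf i (x (\<beta> * (t div \<beta>)) \<omega> $ i)) + Ev t \<omega>"
  by (simp add: Gv_def Ev_def er_def vec_eq_iff)

lemma Ev_M[measurable]: "Ev t \<in> borel_measurable M"
  unfolding Ev_def by measurable

lemma sq_Ev: "sq M (Ev t)"
  unfolding Ev_def by (intro sq_chi er_bound)

lemma sq_Gv:
  assumes "sq M (x (\<beta> * (t div \<beta>)))"
  shows "sq M (Gv t)"
proof -
  have "sq M (\<lambda>\<omega>. (\<chi> i. gf i (x (\<beta> * (t div \<beta>)) \<omega> $ i)) + Ev t \<omega>)"
    by (intro sq_add sq_chi sq_gf assms sq_Ev) measurable
  then show ?thesis by (simp add: Gv_split[abs_def])
qed

lemma sq_all: "sq M (x t) \<and> sq M (y t)"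
proof (induction t rule: less_induct)
  case (less t)
  have X: "sq M (x t)"
  proof (cases t rule: t_cases)
    case 1
    have "x 0 = (\<lambda>_. x0)" using x_init by auto
    then show ?thesis using 1 sq_const by simp
  next
    case (2 k j)
    have eq: "x t = (\<lambda>\<omega>. x (\<beta> * k + j) \<omega> - \<gamma> *\<^sub>R y (\<beta> * k + j) \<omega>)"
      using x_inner[OF 2(1)] 2(2) by auto
    show ?thesis unfolding eq using less 2
      by (intro sq_diff sq_scaleR) (auto)
  next
    case (3 k)
    have eq: "x t = (\<lambda>\<omega>. Wbar ** (x (\<beta> * k) \<omega> - \<gamma> *\<^sub>R (\<Sum>j<\<beta>. y (\<beta> * k + j) \<omega>)))"
      using x_round 3 by auto
    have "sq M (\<lambda>\<omega>. (\<Sum>j<\<beta>. y (\<beta> * k + j) \<omega>))"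
      using less 3 by (intro sq_sum) auto
    then show ?thesis unfolding eq using less 3 beta
      by (intro sq_mm sq_diff sq_scaleR) auto
  qed
  have XX: "sq M (x t')" if "t' \<le> t" for t'
    using less X that by (cases "t' < t") auto
  have G: "sq M (Gv t')" if "t' \<le> t" for t'
    using that by (intro sq_Gv XX) (auto intro: order_trans[OF div_le])
  have Y: "sq M (y t)"
  proof (cases t rule: t_cases)
    case 1
    have "y 0 = Gv 0" using y_init' by auto
    then show ?thesis using G[of 0] 1 by simp
  next
    case (2 k j)
    have eq: "y t = (\<lambda>\<omega>. y (\<beta> * k + j) \<omega> + Gv (\<beta> * k + j + 1) \<omega> - Gv (\<beta> * k + j) \<omega>)"
      using y_inner'[OF 2(1)] 2(2) by auto
    show ?thesis unfolding eq using less 2 G[of "\<beta> * k + j"] G[of "\<beta> * k + j + 1"]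
      by (intro sq_diff sq_add) auto
  next
    case (3 k)
    have eq: "y t = (\<lambda>\<omega>. Wbar ** (y (\<beta> * k) \<omega> + Gv (\<beta> * (k + 1)) \<omega> - Gv (\<beta> * k) \<omega>))"
      using y_round' 3 by auto
    show ?thesis unfolding eq using less 3 beta G[of "\<beta> * k"] G[of "\<beta> * (k + 1)"]
      by (intro sq_mm sq_diff sq_add) auto
  qed
  show ?case using X Y by blast
qed

lemma sq_x: "sq M (x t)" and sq_y: "sq M (y t)"
  using sq_all by auto

end



context flex2 begin

lemma E_Ev: "(\<integral>\<omega>. (norm (Ev t \<omega>))\<^sup>2 \<partial>M) \<le> real CARD('n) * \<sigma>\<^sup>2"
proof -
  have "(\<integral>\<omega>. (norm (Ev t \<omega>))\<^sup>2 \<partial>M) = (\<integral>\<omega>. (\<Sum>i\<in>UNIV. (norm (er t i \<omega>))\<^sup>2) \<partial>M)"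
    by (simp add: Ev_def norm_sq_vec)
  also have "\<dots> = (\<Sum>i\<in>UNIV. (\<integral>\<omega>. (norm (er t i \<omega>))\<^sup>2 \<partial>M))"
    using er_bound(1) unfolding sq_def by (intro Bochner_Integration.integral_sum) auto
  also have "\<dots> \<le> (\<Sum>i\<in>(UNIV::'n set). \<sigma>\<^sup>2)"
    by (intro sum_mono er_bound(2))
  finally show ?thesis by simp
qed

lemma er_FK2:
  assumes "t' < t"
  shows "er t' i \<in> borel_measurable (FK {(s, j). s < t})"
proof (rule er_FK)
  show "\<And>s j. s \<le> t' \<Longrightarrow> (s, j) \<in> {(s, j). s < t}" using assms by auto
  show "x (\<beta> * (t' div \<beta>)) \<in> borel_measurable (FK {(s, j). s < t})"
  proof (rule x_FK)
    fix s j assume "s < \<beta> * (t' div \<beta>)"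
    then have "s < t'" using div_le[of t'] by linarith
    then show "(s, j) \<in> {(s, j). s < t}" using assms by simp
  qed
qed

lemma E_er_sum:
  "sq M (\<lambda>\<omega>. \<Sum>j<m. er (t0 + j) i \<omega>) \<and>
   (\<integral>\<omega>. (norm (\<Sum>j<m. er (t0 + j) i \<omega>))\<^sup>2 \<partial>M) \<le> real m * \<sigma>\<^sup>2"
proof (induction m)
  case 0 then show ?case by (simp add: sq_def)
next
  case (Suc m)
  let ?S = "\<lambda>\<omega>. \<Sum>j<m. er (t0 + j) i \<omega>"
  let ?e = "er (t0 + m) i"
  let ?K = "{(s, j). s < t0 + m}"
  have Sm: "sq M ?S" and Si: "(\<integral>\<omega>. (norm (?S \<omega>))\<^sup>2 \<partial>M) \<le> real m * \<sigma>\<^sup>2" using Suc by auto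
  have SF: "?S \<in> borel_measurable (FK ?K)"
    by (intro borel_measurable_sum er_FK2) auto
  have Z: "(\<lambda>\<omega>. x (\<beta> * ((t0 + m) div \<beta>)) \<omega> $ i) \<in> borel_measurable (FK ?K)"
  proof -
    have "x (\<beta> * ((t0 + m) div \<beta>)) \<in> borel_measurable (FK ?K)"
      by (rule x_FK) (auto intro: less_le_trans[OF _ div_le])
    then show ?thesis by measurable
  qed
  have ti: "(t0 + m, i) \<notin> ?K" by simp
  have cross_int: "integrable M (\<lambda>\<omega>. ?S \<omega> \<bullet> ?e \<omega>)"
    using KL2(1)[OF ti Z SF Sm[unfolded sq_def]] unfolding er_def .
  have cross: "(\<integral>\<omega>. ?S \<omega> \<bullet> ?e \<omega> \<partial>M) = 0"
    using KL2(2)[OF ti Z SF Sm[unfolded sq_def]] unfolding er_def .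
  have eq: "(\<lambda>\<omega>. \<Sum>j<Suc m. er (t0 + j) i \<omega>) = (\<lambda>\<omega>. ?S \<omega> + ?e \<omega>)" by simp
  have sqe: "sq M ?e" by (rule er_bound)
  have SM: "?S \<in> borel_measurable M" by measurable
  have n2: "(norm (?S \<omega> + ?e \<omega>))\<^sup>2 = (norm (?S \<omega>))\<^sup>2 + 2 * (?S \<omega> \<bullet> ?e \<omega>) + (norm (?e \<omega>))\<^sup>2" for \<omega>
    by (simp add: power2_norm_eq_inner inner_add_left inner_add_right inner_commute)
  have "sq M (\<lambda>\<omega>. ?S \<omega> + ?e \<omega>)" by (intro sq_add SM er_M Sm sqe)
  moreover have "(\<integral>\<omega>. (norm (?S \<omega> + ?e \<omega>))\<^sup>2 \<partial>M) \<le> real (Suc m) * \<sigma>\<^sup>2"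
  proof -
    have "(\<integral>\<omega>. (norm (?S \<omega> + ?e \<omega>))\<^sup>2 \<partial>M)
        = (\<integral>\<omega>. (norm (?S \<omega>))\<^sup>2 \<partial>M) + 2 * (\<integral>\<omega>. ?S \<omega> \<bullet> ?e \<omega> \<partial>M) + (\<integral>\<omega>. (norm (?e \<omega>))\<^sup>2 \<partial>M)"
      using Sm sqe cross_int unfolding n2 sq_def by simp
    also have "\<dots> \<le> real m * \<sigma>\<^sup>2 + 0 + \<sigma>\<^sup>2" using Si cross er_bound(2)[of "t0 + m" i] by simp
    finally show ?thesis by (simp add: algebra_simps)
  qed
  ultimately show ?case unfolding eq by simp
qed

lemma E_Ev_sum:
  "sq M (\<lambda>\<omega>. \<Sum>j<m. Ev (t0 + j) \<omega>) \<and>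
   (\<integral>\<omega>. (norm (\<Sum>j<m. Ev (t0 + j) \<omega>))\<^sup>2 \<partial>M) \<le> real CARD('n) * (real m * \<sigma>\<^sup>2)"
proof -
  have comp: "(\<Sum>j<m. Ev (t0 + j) \<omega>) = (\<chi> i. \<Sum>j<m. er (t0 + j) i \<omega>)" for \<omega>
    by (simp add: vec_eq_iff Ev_def sum_component)
  have "sq M (\<lambda>\<omega>. \<chi> i. \<Sum>j<m. er (t0 + j) i \<omega>)"
    using E_er_sum by (intro sq_chi) blast
  moreover have "(\<integral>\<omega>. (norm (\<chi> i. \<Sum>j<m. er (t0 + j) i \<omega>))\<^sup>2 \<partial>M) \<le> real CARD('n) * (real m * \<sigma>\<^sup>2)"
  proof -
    have "(\<integral>\<omega>. (norm (\<chi> i. \<Sum>j<m. er (t0 + j) i \<omega>))\<^sup>2 \<partial>M)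
        = (\<integral>\<omega>. (\<Sum>i\<in>UNIV. (norm (\<Sum>j<m. er (t0 + j) i \<omega>))\<^sup>2) \<partial>M)"
      by (simp add: norm_sq_vec)
    also have "\<dots> = (\<Sum>i\<in>UNIV. (\<integral>\<omega>. (norm (\<Sum>j<m. er (t0 + j) i \<omega>))\<^sup>2 \<partial>M))"
      using E_er_sum unfolding sq_def by (intro Bochner_Integration.integral_sum) blast
    also have "\<dots> \<le> (\<Sum>i\<in>(UNIV::'n set). real m * \<sigma>\<^sup>2)"
      using E_er_sum by (intro sum_mono) blast
    finally show ?thesis by simp
  qed
  ultimately show ?thesis unfolding comp by simp
qed

end



lemma young_rho:
  fixes \<rho> p q r :: real
  assumes "0 \<le> \<rho>" "\<rho> < 1" "0 \<le> p" "0 \<le> q" "0 \<le> r" "r \<le> p + q"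
  shows "\<rho> * r\<^sup>2 \<le> (1 + \<rho>) / 2 * p\<^sup>2 + 2 * \<rho> / (1 - \<rho>) * q\<^sup>2"
proof -
  have "\<rho> * r\<^sup>2 \<le> \<rho> * (p + q)\<^sup>2"
    using assms by (intro mult_left_mono power_mono) auto
  moreover have id: "(1-\<rho>)*(1+\<rho>)*p\<^sup>2 + 4*\<rho>*q\<^sup>2 - 2*(1-\<rho>)*(\<rho>*(p+q)\<^sup>2)
      = ((1-\<rho>)*p - 2*\<rho>*q)\<^sup>2 + 2*\<rho>*(1-\<rho>)*q\<^sup>2"
    by (simp add: power2_eq_square algebra_simps)
  moreover have "0 \<le> 2*\<rho>*(1-\<rho>)*q\<^sup>2" using assms by simp
  ultimately have A: "2*(1-\<rho>)*(\<rho>*(p+q)\<^sup>2) \<le> (1-\<rho>)*(1+\<rho>)*p\<^sup>2 + 4*\<rho>*q\<^sup>2"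
    by (smt (verit) zero_le_power2)
  have B: "(1 + \<rho>) / 2 * p\<^sup>2 + 2 * \<rho> / (1 - \<rho>) * q\<^sup>2 = ((1-\<rho>)*(1+\<rho>)*p\<^sup>2 + 4*\<rho>*q\<^sup>2) / (2*(1-\<rho>))"
    using assms by (simp add: field_simps)
  have "\<rho>*(p+q)\<^sup>2 \<le> ((1-\<rho>)*(1+\<rho>)*p\<^sup>2 + 4*\<rho>*q\<^sup>2) / (2*(1-\<rho>))"
    using A assms by (simp add: pos_le_divide_eq mult.commute)
  with \<open>\<rho> * r\<^sup>2 \<le> \<rho> * (p + q)\<^sup>2\<close> B show ?thesis by simp
qed

lemma rec_sum:
  fixes e c :: "nat \<Rightarrow> real"
  assumes "0 \<le> \<rho>" "\<rho> < 1" "\<And>k. 0 \<le> e k" "\<And>k. e (Suc k) \<le> (1 + \<rho>) / 2 * e k + c k"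
  shows "(\<Sum>k<K. e k) \<le> 2 / (1 - \<rho>) * (e 0 + (\<Sum>k<K. c k))"
proof -
  let ?S = "\<Sum>k<K. e k"
  have "?S \<le> (\<Sum>k<Suc K. e k)" using assms(3)[of K] by simp
  also have "\<dots> = e 0 + (\<Sum>k<K. e (Suc k))" by (rule sum.lessThan_Suc_shift)
  also have "(\<Sum>k<K. e (Suc k)) \<le> (\<Sum>k<K. (1 + \<rho>) / 2 * e k + c k)"
    by (intro sum_mono assms(4))
  also have "\<dots> = (1 + \<rho>) / 2 * ?S + (\<Sum>k<K. c k)"
    by (simp add: sum.distrib sum_distrib_left)
  finally have le: "?S \<le> e 0 + ((1 + \<rho>) / 2 * ?S + (\<Sum>k<K. c k))" by simp
  have "(1 - \<rho>) / 2 * ?S = ?S - (1 + \<rho>) / 2 * ?S" by (simp add: field_simps)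
  with le have "(1 - \<rho>) / 2 * ?S \<le> e 0 + (\<Sum>k<K. c k)" by linarith
  then have "?S \<le> (e 0 + (\<Sum>k<K. c k)) / ((1 - \<rho>) / 2)"
    using assms by (simp add: pos_le_divide_eq mult.commute)
  then show ?thesis by (simp add: field_simps)
qed

context flex2 begin

abbreviation "rho \<equiv> spec_sq (Wbar - avgJ)"

lemma rho_nonneg: "0 \<le> rho"
  by (simp add: spec_sq_def)

lemma y_round_sum:
  assumes "j < \<beta>"
  shows "y (\<beta> * k + j) \<omega> = y (\<beta> * k) \<omega> + Gv (\<beta> * k + j) \<omega> - Gv (\<beta> * k) \<omega>"
  using assms
proof (induction j)
  case 0 then show ?case by simp
next
  case (Suc j)
  then have "j + 2 \<le> \<beta>" by simp
  from y_inner'[OF this, of k \<omega>] Suc show ?case by simp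
qed

lemma Gv_Ev:
  assumes "j < \<beta>"
  shows "Gv (\<beta> * k + j) \<omega> - Gv (\<beta> * k) \<omega> = Ev (\<beta> * k + j) \<omega> - Ev (\<beta> * k) \<omega>"
proof -
  have d1: "(\<beta> * k + j) div \<beta> = k" using assms by simp
  have d2: "(\<beta> * k) div \<beta> = k" using beta by simp
  show ?thesis unfolding Gv_split d1 d2 by simp
qed

lemma sum_y:
  "(\<Sum>j<\<beta>. y (\<beta> * k + j) \<omega>) = real \<beta> *\<^sub>R y (\<beta> * k) \<omega>
     + ((\<Sum>j<\<beta> - 1. Ev (\<beta> * k + 1 + j) \<omega>) - real (\<beta> - 1) *\<^sub>R Ev (\<beta> * k) \<omega>)"
proof -
  have "(\<Sum>j<\<beta>. y (\<beta> * k + j) \<omega>) = (\<Sum>j<\<beta>. y (\<beta> * k) \<omega> + (Ev (\<beta> * k + j) \<omega> - Ev (\<beta> * k) \<omega>))"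
  proof (rule sum.cong[OF refl])
    fix j assume "j \<in> {..<\<beta>}"
    then have j: "j < \<beta>" by simp
    show "y (\<beta> * k + j) \<omega> = y (\<beta> * k) \<omega> + (Ev (\<beta> * k + j) \<omega> - Ev (\<beta> * k) \<omega>)"
      by (subst y_round_sum[OF j], subst add_diff_eq[symmetric], subst Gv_Ev[OF j], rule refl)
  qed
  also have "\<dots> = real \<beta> *\<^sub>R y (\<beta> * k) \<omega> + ((\<Sum>j<\<beta>. Ev (\<beta> * k + j) \<omega>) - real \<beta> *\<^sub>R Ev (\<beta> * k) \<omega>)"
    by (simp add: sum.distrib sum_subtractf sum_constant_scaleR del: sum_constant)
  also have "(\<Sum>j<\<beta>. Ev (\<beta> * k + j) \<omega>) = Ev (\<beta> * k) \<omega> + (\<Sum>j<\<beta> - 1. Ev (\<beta> * k + 1 + j) \<omega>)"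
  proof -
    obtain m where m: "\<beta> = Suc m" using beta by (cases \<beta>) auto
    show ?thesis unfolding m by (subst sum.lessThan_Suc_shift) (simp add: add.assoc)
  qed
  also have "real \<beta> *\<^sub>R Ev (\<beta> * k) \<omega> = Ev (\<beta> * k) \<omega> + real (\<beta> - 1) *\<^sub>R Ev (\<beta> * k) \<omega>"
    using beta by (simp add: of_nat_diff scaleR_diff_left)
  finally show ?thesis by (simp add: algebra_simps)
qed

lemma sq2: "(norm (a + b :: 'v::real_normed_vector))\<^sup>2 \<le> 2 * (norm a)\<^sup>2 + 2 * (norm b)\<^sup>2"
proof -
  have "(norm (a + b))\<^sup>2 \<le> (norm a + norm b)\<^sup>2" by (simp add: power_mono norm_triangle_ineq)
  also have "\<dots> \<le> 2 * (norm a)\<^sup>2 + 2 * (norm b)\<^sup>2"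
    using sum_squares_bound[of "norm a" "norm b"] by (simp add: power2_sum)
  finally show ?thesis .
qed

lemma sq2': "(norm (a - b :: 'v::real_normed_vector))\<^sup>2 \<le> 2 * (norm a)\<^sup>2 + 2 * (norm b)\<^sup>2"
  using sq2[of a "-b"] by simp

lemma pointwise:
  "(norm (dev (x (\<beta> * (k + 1)) \<omega>)))\<^sup>2
    \<le> (1 + rho) / 2 * (norm (dev (x (\<beta> * k) \<omega>)))\<^sup>2
      + 2 * rho * \<gamma>\<^sup>2 / (1 - rho) *
        (2 * (real \<beta>)\<^sup>2 * (norm (dev (y (\<beta> * k) \<omega>)))\<^sup>2
         + 4 * (norm (\<Sum>j<\<beta> - 1. Ev (\<beta> * k + 1 + j) \<omega>))\<^sup>2
         + 4 * (real (\<beta> - 1))\<^sup>2 * (norm (Ev (\<beta> * k) \<omega>))\<^sup>2)"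
proof -
  let ?u = "dev (x (\<beta> * k) \<omega>)"
  let ?Y = "\<Sum>j<\<beta>. y (\<beta> * k + j) \<omega>"
  let ?v = "dev ?Y"
  let ?A = "\<Sum>j<\<beta> - 1. Ev (\<beta> * k + 1 + j) \<omega>"
  let ?B = "real (\<beta> - 1) *\<^sub>R Ev (\<beta> * k) \<omega>"
  have dx: "dev (x (\<beta> * (k + 1)) \<omega>) = (Wbar - avgJ) ** (?u - \<gamma> *\<^sub>R ?v)"
    by (simp only: x_round) (simp add: avg_pres_dev[OF Wp] dev_diff dev_scaleR)
  have L1: "(norm (dev (x (\<beta> * (k + 1)) \<omega>)))\<^sup>2 \<le> rho * (norm (?u - \<gamma> *\<^sub>R ?v))\<^sup>2"
    unfolding dx by (rule norm_mm_sq_le)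
  also have "\<dots> \<le> (1 + rho) / 2 * (norm ?u)\<^sup>2 + 2 * rho / (1 - rho) * (\<bar>\<gamma>\<bar> * norm ?v)\<^sup>2"
    using rho_nonneg rho
    by (intro young_rho) (auto intro: order_trans[OF norm_triangle_ineq4])
  also have "(\<bar>\<gamma>\<bar> * norm ?v)\<^sup>2 = \<gamma>\<^sup>2 * (norm ?v)\<^sup>2" by (simp add: power_mult_distrib)
  finally have L: "(norm (dev (x (\<beta> * (k + 1)) \<omega>)))\<^sup>2 \<le> (1 + rho) / 2 * (norm ?u)\<^sup>2 + 2 * rho / (1 - rho) * (\<gamma>\<^sup>2 * (norm ?v)\<^sup>2)" .
  have V: "(norm ?v)\<^sup>2 \<le> 2 * (real \<beta>)\<^sup>2 * (norm (dev (y (\<beta> * k) \<omega>)))\<^sup>2 + 4 * (norm ?A)\<^sup>2 + 4 * (real (\<beta> - 1))\<^sup>2 * (norm (Ev (\<beta> * k) \<omega>))\<^sup>2"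
  proof -
    have v: "?v = real \<beta> *\<^sub>R dev (y (\<beta> * k) \<omega>) + dev (?A - ?B)"
      by (simp add: sum_y dev_add dev_scaleR)
    have "(norm ?v)\<^sup>2 \<le> 2 * (norm (real \<beta> *\<^sub>R dev (y (\<beta> * k) \<omega>)))\<^sup>2 + 2 * (norm (dev (?A - ?B)))\<^sup>2"
      unfolding v by (rule sq2)
    moreover have "(norm (dev (?A - ?B)))\<^sup>2 \<le> (norm (?A - ?B))\<^sup>2"
      by (simp add: power_mono norm_dev_le)
    moreover have "(norm (?A - ?B))\<^sup>2 \<le> 2 * (norm ?A)\<^sup>2 + 2 * (norm ?B)\<^sup>2" by (rule sq2')
    moreover have "(norm ?B)\<^sup>2 = (real (\<beta> - 1))\<^sup>2 * (norm (Ev (\<beta> * k) \<omega>))\<^sup>2"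
      by (simp add: power_mult_distrib)
    moreover have "(norm (real \<beta> *\<^sub>R dev (y (\<beta> * k) \<omega>)))\<^sup>2 = (real \<beta>)\<^sup>2 * (norm (dev (y (\<beta> * k) \<omega>)))\<^sup>2"
      by (simp add: power_mult_distrib)
    ultimately show ?thesis by linarith
  qed
  have c0: "0 \<le> 2 * rho * \<gamma>\<^sup>2 / (1 - rho)" using rho_nonneg rho by simp
  have E: "2 * rho / (1 - rho) * (\<gamma>\<^sup>2 * (norm ?v)\<^sup>2) = 2 * rho * \<gamma>\<^sup>2 / (1 - rho) * (norm ?v)\<^sup>2"
    by simp
  have F: "2 * rho * \<gamma>\<^sup>2 / (1 - rho) * (norm ?v)\<^sup>2 \<le> 2 * rho * \<gamma>\<^sup>2 / (1 - rho) *
        (2 * (real \<beta>)\<^sup>2 * (norm (dev (y (\<beta> * k) \<omega>)))\<^sup>2 + 4 * (norm ?A)\<^sup>2 + 4 * (real (\<beta> - 1))\<^sup>2 * (norm (Ev (\<beta> * k) \<omega>))\<^sup>2)"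
    by (rule mult_left_mono[OF V c0])
  show ?thesis
    by (rule order_trans[OF L]) (subst E, rule add_left_mono[OF F])
qed

end



lemma final_alg:
  fixes K d e0 r g b Q N s :: real
  assumes "0 < K" "0 < d"
  shows "(1 / K) * (2 / d * (e0 + 2 * r * g / d * (2 * b * Q + K * (4 * b * N * s))))
    = 2 * e0 / (d * K) + 16 * N * g * b * r / d\<^sup>2 * s + 8 * g * b * r / (d\<^sup>2 * K) * Q"
  using assms by (simp add: field_simps power2_eq_square)

context flex2 begin

definition ee :: "nat \<Rightarrow> real" where
  "ee k = (\<integral>\<omega>. (norm (dev (x (\<beta> * k) \<omega>)))\<^sup>2 \<partial>M)"
definition qq :: "nat \<Rightarrow> real" where
  "qq k = (\<integral>\<omega>. (norm (dev (y (\<beta> * k) \<omega>)))\<^sup>2 \<partial>M)"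

lemma ee_nonneg: "0 \<le> ee k"
  unfolding ee_def by simp

lemma erec:
  "ee (Suc k) \<le> (1 + rho) / 2 * ee k
     + 2 * rho * \<gamma>\<^sup>2 / (1 - rho) * (2 * (real \<beta>)\<^sup>2 * qq k + 4 * (real \<beta>)\<^sup>2 * real CARD('n) * \<sigma>\<^sup>2)"
proof -
  let ?C = "2 * rho * \<gamma>\<^sup>2 / (1 - rho)"
  let ?f0 = "\<lambda>\<omega>. (norm (dev (x (\<beta> * (k + 1)) \<omega>)))\<^sup>2"
  let ?f1 = "\<lambda>\<omega>. (norm (dev (x (\<beta> * k) \<omega>)))\<^sup>2"
  let ?f2 = "\<lambda>\<omega>. (norm (dev (y (\<beta> * k) \<omega>)))\<^sup>2"
  let ?f3 = "\<lambda>\<omega>. (norm (\<Sum>j<\<beta> - 1. Ev (\<beta> * k + 1 + j) \<omega>))\<^sup>2"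
  let ?f4 = "\<lambda>\<omega>. (norm (Ev (\<beta> * k) \<omega>))\<^sup>2"
  have i0: "integrable M ?f0" using sq_dev[OF x_M sq_x] unfolding sq_def .
  have i1: "integrable M ?f1" using sq_dev[OF x_M sq_x] unfolding sq_def .
  have i2: "integrable M ?f2" using sq_dev[OF y_M sq_y] unfolding sq_def .
  have i3: "integrable M ?f3" using conjunct1[OF E_Ev_sum[of "\<beta> * k + 1" "\<beta> - 1"]] unfolding sq_def .
  have i4: "integrable M ?f4" using sq_Ev unfolding sq_def .
  have b3: "(\<integral>\<omega>. ?f3 \<omega> \<partial>M) \<le> real CARD('n) * (real (\<beta> - 1) * \<sigma>\<^sup>2)"
    using conjunct2[OF E_Ev_sum[of "\<beta> * k + 1" "\<beta> - 1"]] .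
  have b4: "(\<integral>\<omega>. ?f4 \<omega> \<partial>M) \<le> real CARD('n) * \<sigma>\<^sup>2" by (rule E_Ev)
  have "ee (Suc k) = (\<integral>\<omega>. ?f0 \<omega> \<partial>M)" by (simp add: ee_def)
  also have "\<dots> \<le> (\<integral>\<omega>. (1 + rho) / 2 * ?f1 \<omega> + ?C * (2 * (real \<beta>)\<^sup>2 * ?f2 \<omega> + 4 * ?f3 \<omega> + 4 * (real (\<beta> - 1))\<^sup>2 * ?f4 \<omega>) \<partial>M)"
    using i0 i1 i2 i3 i4 by (intro integral_mono pointwise) auto
  also have "\<dots> = (1 + rho) / 2 * ee k + ?C * (2 * (real \<beta>)\<^sup>2 * qq k + 4 * (\<integral>\<omega>. ?f3 \<omega> \<partial>M) + 4 * (real (\<beta> - 1))\<^sup>2 * (\<integral>\<omega>. ?f4 \<omega> \<partial>M))"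
    using i1 i2 i3 i4 by (simp add: ee_def qq_def)
  also have "\<dots> \<le> (1 + rho) / 2 * ee k + ?C * (2 * (real \<beta>)\<^sup>2 * qq k + 4 * (real CARD('n) * (real (\<beta> - 1) * \<sigma>\<^sup>2)) + 4 * (real (\<beta> - 1))\<^sup>2 * (real CARD('n) * \<sigma>\<^sup>2))"
    using b3 b4 rho_nonneg rho
    by (intro add_left_mono mult_left_mono add_mono order_refl) auto
  also have "\<dots> \<le> (1 + rho) / 2 * ee k + ?C * (2 * (real \<beta>)\<^sup>2 * qq k + 4 * (real \<beta>)\<^sup>2 * real CARD('n) * \<sigma>\<^sup>2)"
  proof -
    have "4 * (real CARD('n) * (real (\<beta> - 1) * \<sigma>\<^sup>2)) + 4 * (real (\<beta> - 1))\<^sup>2 * (real CARD('n) * \<sigma>\<^sup>2)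
        = 4 * (real (\<beta> - 1) * real \<beta>) * real CARD('n) * \<sigma>\<^sup>2"
      using beta by (simp add: of_nat_diff power2_eq_square algebra_simps)
    also have "\<dots> \<le> 4 * (real \<beta>)\<^sup>2 * real CARD('n) * \<sigma>\<^sup>2"
      using beta by (intro mult_right_mono) (auto simp: power2_eq_square intro!: mult_right_mono)
    finally have "4 * (real CARD('n) * (real (\<beta> - 1) * \<sigma>\<^sup>2)) + 4 * (real (\<beta> - 1))\<^sup>2 * (real CARD('n) * \<sigma>\<^sup>2)
        \<le> 4 * (real \<beta>)\<^sup>2 * real CARD('n) * \<sigma>\<^sup>2" .
    then show ?thesis using rho_nonneg rho
      by (intro add_left_mono mult_left_mono) auto
  qed
  finally show ?thesis .
qed

lemma main:
  assumes K: "1 \<le> K"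
  shows "(1 / real K) * (\<Sum>k<K. \<integral>\<omega>. (norm (dev (x (\<beta> * k) \<omega>)))\<^sup>2 \<partial>M)
     \<le> 2 * (\<integral>\<omega>. (norm (dev (x 0 \<omega>)))\<^sup>2 \<partial>M) / ((1 - rho) * real K)
       + 16 * real CARD('n) * \<gamma>\<^sup>2 * (real \<beta>)\<^sup>2 * rho / (1 - rho)\<^sup>2 * \<sigma>\<^sup>2
       + 8 * \<gamma>\<^sup>2 * (real \<beta>)\<^sup>2 * rho / ((1 - rho)\<^sup>2 * real K)
           * (\<Sum>k<K. \<integral>\<omega>. (norm (dev (y (\<beta> * k) \<omega>)))\<^sup>2 \<partial>M)"
proof -
  define C where "C = 2 * rho * \<gamma>\<^sup>2 / (1 - rho)"
  let ?C = C
  let ?c = "\<lambda>k. ?C * (2 * (real \<beta>)\<^sup>2 * qq k + 4 * (real \<beta>)\<^sup>2 * real CARD('n) * \<sigma>\<^sup>2)"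
  have S: "(\<Sum>k<K. ee k) \<le> 2 / (1 - rho) * (ee 0 + (\<Sum>k<K. ?c k))"
    using rho_nonneg rho ee_nonneg erec unfolding C_def by (intro rec_sum) auto
  have sc: "(\<Sum>k<K. ?c k) = ?C * (2 * (real \<beta>)\<^sup>2 * (\<Sum>k<K. qq k) + real K * (4 * (real \<beta>)\<^sup>2 * real CARD('n) * \<sigma>\<^sup>2))"
    by (simp add: sum.distrib flip: sum_distrib_left)
  have Kp: "0 < real K" using K by simp
  have r1: "0 < 1 - rho" using rho by simp
  have "(1 / real K) * (\<Sum>k<K. ee k) \<le> (1 / real K) * (2 / (1 - rho) * (ee 0 + (\<Sum>k<K. ?c k)))"
    using S Kp by (intro mult_left_mono) auto
  also have "\<dots> = 2 * ee 0 / ((1 - rho) * real K)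
       + 16 * real CARD('n) * \<gamma>\<^sup>2 * (real \<beta>)\<^sup>2 * rho / (1 - rho)\<^sup>2 * \<sigma>\<^sup>2
       + 8 * \<gamma>\<^sup>2 * (real \<beta>)\<^sup>2 * rho / ((1 - rho)\<^sup>2 * real K) * (\<Sum>k<K. qq k)"
    unfolding sc unfolding C_def by (rule final_alg[OF Kp r1])
  finally show ?thesis by (simp add: ee_def qq_def)
qed

end


theorem lemma7:
  fixes M :: "'a measure"
    and D :: "'n::finite \<Rightarrow> 's measure"
    and \<xi> :: "nat \<Rightarrow> 'n \<Rightarrow> 'a \<Rightarrow> 's"
    and f :: "'n \<Rightarrow> real^'p::finite \<Rightarrow> real"
    and gf :: "'n \<Rightarrow> real^'p \<Rightarrow> real^'p"
    and g :: "'n \<Rightarrow> real^'p \<Rightarrow> 's \<Rightarrow> real^'p"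
    and W Wbar :: "real^'n^'n"
    and L \<sigma> \<gamma> :: real
    and \<alpha> \<beta> K :: nat
    and x0 :: "real^'p^'n"
    and x y :: "nat \<Rightarrow> 'a \<Rightarrow> real^'p^'n"
  assumes P: "prob_space M"
    \<comment> \<open>samples: node i at iteration t draws xi t i ~ D i, all independent\<close>
    and distr: "\<And>t i. distr M (D i) (\<xi> t i) = D i"
    and indep: "prob_space.indep_vars M (\<lambda>(t, i). D i) (\<lambda>(t, i). \<xi> t i) UNIV"
    and g_meas: "\<And>i. (\<lambda>(z, s). g i z s) \<in> borel_measurable (borel \<Otimes>\<^sub>M D i)"
    \<comment> \<open>(S): each f_i has L-Lipschitz gradient gf i\<close>
    and grad: "\<And>i z. (f i has_derivative (\<lambda>h. gf i z \<bullet> h)) (at z)"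
    and S: "\<And>i u v. norm (gf i u - gf i v) \<le> L * norm (u - v)"
    \<comment> \<open>unbiased stochastic oracle and (V)\<close>
    and unbiased: "\<And>i z. integrable (D i) (g i z) \<and> (\<integral>s. g i z s \<partial>D i) = gf i z"
    and V: "\<And>i z. integrable (D i) (\<lambda>s. (norm (g i z s - gf i z))\<^sup>2) \<and>
                  (\<integral>s. (norm (g i z s - gf i z))\<^sup>2 \<partial>D i) \<le> \<sigma>\<^sup>2"
    \<comment> \<open>(G)\<close>
    and G: "doubly_stochastic W" "spec_sq (W - avgJ) < 1"
    \<comment> \<open>mixing matrix of FlexGT or Acc-FlexGT\<close>
    and Wbar: "Wbar = mat_pow W \<alpha> \<or> Wbar = acc_mix W (acc_eta (spec_sq (W - avgJ))) \<alpha>"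
    and rho_bar: "spec_sq (Wbar - avgJ) < 1"
    and params: "1 \<le> \<alpha>" "1 \<le> \<beta>" "0 < \<gamma>"
    \<comment> \<open>the FlexGT recursion; stochastic gradients use snapshots z_t = x_{beta floor(t/beta)}\<close>
    and x_init: "\<And>\<omega>. x 0 \<omega> = x0"
    and y_init: "\<And>\<omega>. y 0 \<omega> = (\<chi> i. g i (x 0 \<omega> $ i) (\<xi> 0 i \<omega>))"
    and x_inner: "\<And>k j \<omega>. j + 2 \<le> \<beta> \<Longrightarrow>
       x (\<beta> * k + j + 1) \<omega> = x (\<beta> * k + j) \<omega> - \<gamma> *\<^sub>R y (\<beta> * k + j) \<omega>"
    and y_inner: "\<And>k j \<omega>. j + 2 \<le> \<beta> \<Longrightarrow>
       y (\<beta> * k + j + 1) \<omega> = y (\<beta> * k + j) \<omega>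
         + (\<chi> i. g i (x (\<beta> * ((\<beta> * k + j + 1) div \<beta>)) \<omega> $ i) (\<xi> (\<beta> * k + j + 1) i \<omega>))
         - (\<chi> i. g i (x (\<beta> * ((\<beta> * k + j) div \<beta>)) \<omega> $ i) (\<xi> (\<beta> * k + j) i \<omega>))"
    and x_round: "\<And>k \<omega>.
       x (\<beta> * (k + 1)) \<omega> = Wbar ** (x (\<beta> * k) \<omega> - \<gamma> *\<^sub>R (\<Sum>j<\<beta>. y (\<beta> * k + j) \<omega>))"
    and y_round: "\<And>k \<omega>.
       y (\<beta> * (k + 1)) \<omega> = Wbar ** (y (\<beta> * k) \<omega>
         + (\<chi> i. g i (x (\<beta> * ((\<beta> * (k + 1)) div \<beta>)) \<omega> $ i) (\<xi> (\<beta> * (k + 1)) i \<omega>))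
         - (\<chi> i. g i (x (\<beta> * ((\<beta> * k) div \<beta>)) \<omega> $ i) (\<xi> (\<beta> * k) i \<omega>)))"
    and step: "\<gamma> \<le> 1 / (4 * real \<beta> * L)"
    and K: "1 \<le> K"
  shows "(1 / real K) * (\<Sum>k<K. \<integral>\<omega>. (norm (dev (x (\<beta> * k) \<omega>)))\<^sup>2 \<partial>M)
     \<le> 2 * (\<integral>\<omega>. (norm (dev (x 0 \<omega>)))\<^sup>2 \<partial>M) / ((1 - spec_sq (Wbar - avgJ)) * real K)
       + 16 * real CARD('n) * \<gamma>\<^sup>2 * (real \<beta>)\<^sup>2 * spec_sq (Wbar - avgJ)
           / (1 - spec_sq (Wbar - avgJ))\<^sup>2 * \<sigma>\<^sup>2
       + 8 * \<gamma>\<^sup>2 * (real \<beta>)\<^sup>2 * spec_sq (Wbar - avgJ) / ((1 - spec_sq (Wbar - avgJ))\<^sup>2 * real K)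
           * (\<Sum>k<K. \<integral>\<omega>. (norm (dev (y (\<beta> * k) \<omega>)))\<^sup>2 \<partial>M)"
  proof -
  interpret P: prob_space M by (rule P)
  have Wp: "avg_pres Wbar"
    using Wbar ds_avg_pres[OF G(1)] mat_pow_avg_pres acc_mix_avg_pres by auto
  interpret F: flex2 M D \<xi> gf g L \<sigma> Wbar \<gamma> \<beta> x0 x y
  proof (unfold_locales)
    show "\<And>t i. distr M (D i) (\<xi> t i) = D i" by (rule distr)
    show "P.indep_vars (\<lambda>(t, i). D i) (\<lambda>(t, i). \<xi> t i) UNIV" by (rule indep)
  qed (use g_meas S unbiased V Wp rho_bar params x_init y_init x_inner y_inner x_round y_round in auto)
  show ?thesis using F.main[OF K] by simp
qed

end
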